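(* Let $X$ be the graph with vertices $x_0,x_1,x_2,x_3,x_4,\bar x_4$ and (besides loops) edges $x_0x_1, x_1x_2, x_2x_3, x_3x_4, x_4x_0, x_3\bar x_4, \bar x_4x_0$. Define $\tau:X\times X\to X$ by $\tau(x_i,x_j)=x_{i+j}$; $\tau(x_0,\bar x_4)=\tau(\bar x_4,x_0)=\bar x_4$; $\tau(x_i,\bar x_4)=\tau(\bar x_4,x_i)=x_{i+4}$ for $i\ne0$; $\tau(\bar x_4,\bar x_4)=x_3$ (subscripts mod 5). Then $\tau$ is $\mathrm{NP}_1$-continuous, $(X,x_0,\tau)$ is a unital (hence pointed) $\mathrm{NP}_1$-digital H-space, and $(X,x_0,\tau)$ is not pointed homotopy-associative; consequently it is not pointed H-equivalent to any $\mathrm{NP}_1$-digital topological group.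
   Context: Digital images are finite reflexive graphs; continuous maps send adjacent points to adjacent points. On products, $\mathrm{NP}_1$ declares two tuples adjacent iff they differ in at most one coordinate, and in that coordinate the entries are adjacent. An $\mathrm{NP}_1$-homotopy from $f$ to $g:X\to Y$ is an $\mathrm{NP}_1$-continuous $H:X\times[0,m]_{\mathbb{Z}}\to Y$ with $H(\cdot,0)=f$, $H(\cdot,m)=g$; for pointed maps $(X,a)\to(Y,b)$ it is pointed if $H(a,t)=b$ for all $t$. An $\mathrm{NP}_1$-digital H-space is $(X,e,\mu)$ with $\mu:X\times X\to X$ $\mathrm{NP}_1$-continuous, $\mu\circ(\mathrm{id}_X,c_e)\simeq_1\mathrm{id}_X$, $\mu\circ(c_e,\mathrm{id}_X)\simeq_1\mathrm{id}_X$ ($(f,g)(x)=(f(x),g(x))$, $c_e$ constant); it is a pointed H-space if these homotopies are pointed; unital if the composites equal $\mathrm{id}_X$. It is pointed homotopy-associative if $\mu\circ(\mathrm{id}\times\mu)$ and $\mu\circ(\mu\times\mathrm{id})$ are homotopic by a pointed $\mathrm{NP}_1$-homotopy $(X\times X\times X,(e,e,e))\times[0,k]_{\mathbb{Z}}\to(X,e)$. Pointed H-equivalence: continuous pointed maps $f,g$ between the H-spaces with $f\circ g\simeq\mathrm{id}$, $g\circ f\simeq\mathrm{id}$, $f\circ\mu_X\simeq\mu_Y\circ(f\times f)$, $g\circ\mu_Y\simeq\mu_X\circ(g\times g)$, all by pointed $\mathrm{NP}_1$-homotopies. An $\mathrm{NP}_1$-digital topological group is a digital image with a group structure whose multiplication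 is $\mathrm{NP}_1$-continuous and inversion continuous. *)

theory Defs
  imports "HOL-Algebra.Group"
begin

record 'a dimg =
  verts :: "'a set"
  adj :: "'a \<Rightarrow> 'a \<Rightarrow> bool"

definition digital_image :: "'a dimg \<Rightarrow> bool" where
  "digital_image X \<longleftrightarrow> finite (verts X)
     \<and> (\<forall>x\<in>verts X. adj X x x)
     \<and> (\<forall>x y. adj X x y \<longrightarrow> adj X y x)
     \<and> (\<forall>x y. adj X x y \<longrightarrow> x \<in> verts X \<and> y \<in> verts X)"

definition dcont :: "'a dimg \<Rightarrow> 'b dimg \<Rightarrow> ('a \<Rightarrow> 'b) \<Rightarrow> bool" where
  "dcont X Y f \<longleftrightarrow> (\<forall>x\<in>verts X. f x \<in> verts Y)
     \<and> (\<forall>x\<in>verts X. \<forall>y\<in>verts X. adj X x y \<longrightarrow> adj Y (f x) (f y))"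

text \<open>NP_1 product: tuples differing in at most one coordinate, adjacent there.
  The triple product is the iterate np1 X (np1 X Y), which is the same relation.\<close>
definition np1 :: "'a dimg \<Rightarrow> 'b dimg \<Rightarrow> ('a \<times> 'b) dimg" where
  "np1 X Y = \<lparr> verts = verts X \<times> verts Y,
     adj = (\<lambda>(x,y) (x',y'). (x = x' \<and> x \<in> verts X \<and> adj Y y y')
                          \<or> (y = y' \<and> y \<in> verts Y \<and> adj X x x')) \<rparr>"

definition dinterval :: "nat \<Rightarrow> nat dimg" where
  "dinterval m = \<lparr> verts = {0..m},
     adj = (\<lambda>s t. s \<le> m \<and> t \<le> m \<and> s \<le> t + 1 \<and> t \<le> s + 1) \<rparr>"

definition np1_homotopic :: "'a dimg \<Rightarrow> 'b dimg \<Rightarrow> ('a \<Rightarrow> 'b) \<Rightarrow> ('a \<Rightarrow> 'b) \<Rightarrow> bool" where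
  "np1_homotopic X Y f g \<longleftrightarrow> (\<exists>m H.
      dcont (np1 X (dinterval m)) Y (\<lambda>(x,t). H x t)
      \<and> (\<forall>x\<in>verts X. H x 0 = f x \<and> H x m = g x))"

definition np1_pointed_homotopic ::
  "'a dimg \<Rightarrow> 'a \<Rightarrow> 'b dimg \<Rightarrow> 'b \<Rightarrow> ('a \<Rightarrow> 'b) \<Rightarrow> ('a \<Rightarrow> 'b) \<Rightarrow> bool" where
  "np1_pointed_homotopic X a Y b f g \<longleftrightarrow> (\<exists>m H.
      dcont (np1 X (dinterval m)) Y (\<lambda>(x,t). H x t)
      \<and> (\<forall>x\<in>verts X. H x 0 = f x \<and> H x m = g x)
      \<and> (\<forall>t\<le>m. H a t = b))"

definition np1_hspace :: "'a dimg \<Rightarrow> 'a \<Rightarrow> ('a \<times> 'a \<Rightarrow> 'a) \<Rightarrow> bool" where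
  "np1_hspace X e mu \<longleftrightarrow> digital_image X \<and> e \<in> verts X
     \<and> dcont (np1 X X) X mu
     \<and> np1_homotopic X X (\<lambda>x. mu (x, e)) id
     \<and> np1_homotopic X X (\<lambda>x. mu (e, x)) id"

definition np1_pointed_hspace :: "'a dimg \<Rightarrow> 'a \<Rightarrow> ('a \<times> 'a \<Rightarrow> 'a) \<Rightarrow> bool" where
  "np1_pointed_hspace X e mu \<longleftrightarrow> np1_hspace X e mu
     \<and> np1_pointed_homotopic X e X e (\<lambda>x. mu (x, e)) id
     \<and> np1_pointed_homotopic X e X e (\<lambda>x. mu (e, x)) id"

definition np1_unital_hspace :: "'a dimg \<Rightarrow> 'a \<Rightarrow> ('a \<times> 'a \<Rightarrow> 'a) \<Rightarrow> bool" where
  "np1_unital_hspace X e mu \<longleftrightarrow> np1_hspace X e mu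
     \<and> (\<forall>x\<in>verts X. mu (x, e) = x \<and> mu (e, x) = x)"

definition pointed_homotopy_associative :: "'a dimg \<Rightarrow> 'a \<Rightarrow> ('a \<times> 'a \<Rightarrow> 'a) \<Rightarrow> bool" where
  "pointed_homotopy_associative X e mu \<longleftrightarrow>
     np1_pointed_homotopic (np1 X (np1 X X)) (e, (e, e)) X e
       (\<lambda>(x, y, z). mu (x, mu (y, z))) (\<lambda>(x, y, z). mu (mu (x, y), z))"

definition pointed_H_equivalent ::
  "'a dimg \<Rightarrow> 'a \<Rightarrow> ('a \<times> 'a \<Rightarrow> 'a) \<Rightarrow> 'b dimg \<Rightarrow> 'b \<Rightarrow> ('b \<times> 'b \<Rightarrow> 'b) \<Rightarrow> bool" where
  "pointed_H_equivalent X e mu Y e' nu \<longleftrightarrow> (\<exists>f g.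
      dcont X Y f \<and> dcont Y X g \<and> f e = e' \<and> g e' = e
      \<and> np1_pointed_homotopic Y e' Y e' (f \<circ> g) id
      \<and> np1_pointed_homotopic X e X e (g \<circ> f) id
      \<and> np1_pointed_homotopic (np1 X X) (e, e) Y e' (f \<circ> mu) (\<lambda>(x, y). nu (f x, f y))
      \<and> np1_pointed_homotopic (np1 Y Y) (e', e') X e (g \<circ> nu) (\<lambda>(x, y). mu (g x, g y)))"

definition np1_digital_topological_group :: "'b dimg \<Rightarrow> 'b monoid \<Rightarrow> bool" where
  "np1_digital_topological_group Y G \<longleftrightarrow> digital_image Y \<and> group G
     \<and> carrier G = verts Y
     \<and> dcont (np1 Y Y) Y (\<lambda>(x, y). x \<otimes>\<^bsub>G\<^esub> y)
     \<and> dcont Y Y (\<lambda>x. inv\<^bsub>G\<^esub> x)"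

text \<open>P i stands for x_i (i < 5), Pbar for the extra vertex bar x_4.\<close>
datatype pt = P nat | Pbar

definition Xverts :: "pt set" where
  "Xverts = {P 0, P 1, P 2, P 3, P 4, Pbar}"

definition Xedges :: "(pt \<times> pt) set" where
  "Xedges = {(P 0, P 1), (P 1, P 2), (P 2, P 3), (P 3, P 4), (P 4, P 0),
             (P 3, Pbar), (Pbar, P 0)}"

definition Xex :: "pt dimg" where
  "Xex = \<lparr> verts = Xverts,
     adj = (\<lambda>a b. a \<in> Xverts \<and> b \<in> Xverts
                 \<and> (a = b \<or> (a, b) \<in> Xedges \<or> (b, a) \<in> Xedges)) \<rparr>"

fun tau :: "pt \<times> pt \<Rightarrow> pt" where
  "tau (P i, P j) = P ((i + j) mod 5)"
| "tau (P i, Pbar) = (if i = 0 then Pbar else P ((i + 4) mod 5))"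
| "tau (Pbar, P i) = (if i = 0 then Pbar else P ((i + 4) mod 5))"
| "tau (Pbar, Pbar) = P 3"

end

theory Submission
  imports Defs
begin


definition F1 :: "pt \<times> pt \<times> pt \<Rightarrow> pt" where "F1 = (\<lambda>(x, y, z). tau (x, tau (y, z)))"
definition F2 :: "pt \<times> pt \<times> pt \<Rightarrow> pt" where "F2 = (\<lambda>(x, y, z). tau (tau (x, y), z))"
lemmas XS = Xex_def Xverts_def Xedges_def np1_def F1_def F2_def

lemma ac_init: "x \<in> Xverts \<Longrightarrow> adj Xex x c \<Longrightarrow> (\<forall>v\<in>Xverts. adj Xex v c \<longrightarrow> v \<in> A) \<Longrightarrow> x \<in> A"
  by blast
lemma ac_rev: "x \<in> A \<Longrightarrow> y \<in> B \<Longrightarrow> adj Xex x y \<Longrightarrow> (\<forall>v\<in>A. \<forall>w\<in>B. adj Xex v w \<longrightarrow> v \<in> A') \<Longrightarrow> x \<in> A'"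
  by blast

lemma rig_id:
  fixes h :: "_ \<Rightarrow> pt"
  assumes V: "\<And>p. p \<in> verts (Xex) \<Longrightarrow> h p \<in> Xverts"
    and C: "\<And>p q. p \<in> verts (Xex) \<Longrightarrow> q \<in> verts (Xex) \<Longrightarrow> adj (Xex) p q \<Longrightarrow> adj Xex (h p) (h q)"
    and B: "h (P 0) = P 0"
    and N: "\<And>p. p \<in> verts (Xex) \<Longrightarrow> adj Xex (h p) (id p)"
  shows "\<forall>p\<in>verts (Xex). h p = id p"
proof -
  have f0: "h (P 0) \<in> {P 0}" using B by simp
  have f1: "h (P 1) \<in> {P 0, P 1, P 2}" by (rule ac_init[OF V[of "(P 1)"] N[of "(P 1)"]]) (simp_all add: XS )
  have f2: "h (P 2) \<in> {P 1, P 2, P 3}" by (rule ac_init[OF V[of "(P 2)"] N[of "(P 2)"]]) (simp_all add: XS )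
  have f3: "h (P 3) \<in> {P 2, P 3, P 4, Pbar}" by (rule ac_init[OF V[of "(P 3)"] N[of "(P 3)"]]) (simp_all add: XS )
  have f4: "h (P 4) \<in> {P 0, P 3, P 4}" by (rule ac_init[OF V[of "(P 4)"] N[of "(P 4)"]]) (simp_all add: XS )
  have f5: "h (Pbar) \<in> {P 0, P 3, Pbar}" by (rule ac_init[OF V[of "(Pbar)"] N[of "(Pbar)"]]) (simp_all add: XS )
  have f6: "h (P 1) \<in> {P 0, P 1}" by (rule ac_rev[OF f1 f0 C[of "(P 1)" "(P 0)"]]) (simp_all add: XS)
  have f7: "h (P 2) \<in> {P 1, P 2}" by (rule ac_rev[OF f2 f6 C[of "(P 2)" "(P 1)"]]) (simp_all add: XS)
  have f8: "h (P 3) \<in> {P 2, P 3}" by (rule ac_rev[OF f3 f7 C[of "(P 3)" "(P 2)"]]) (simp_all add: XS)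
  have f9: "h (P 4) \<in> {P 0, P 4}" by (rule ac_rev[OF f4 f0 C[of "(P 4)" "(P 0)"]]) (simp_all add: XS)
  have f10: "h (P 4) \<in> {P 4}" by (rule ac_rev[OF f9 f8 C[of "(P 4)" "(P 3)"]]) (simp_all add: XS)
  have f11: "h (Pbar) \<in> {P 0, Pbar}" by (rule ac_rev[OF f5 f0 C[of "(Pbar)" "(P 0)"]]) (simp_all add: XS)
  have f12: "h (Pbar) \<in> {Pbar}" by (rule ac_rev[OF f11 f8 C[of "(Pbar)" "(P 3)"]]) (simp_all add: XS)
  have f13: "h (P 3) \<in> {P 3}" by (rule ac_rev[OF f8 f10 C[of "(P 3)" "(P 4)"]]) (simp_all add: XS)
  have f14: "h (P 2) \<in> {P 2}" by (rule ac_rev[OF f7 f13 C[of "(P 2)" "(P 3)"]]) (simp_all add: XS)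
  have f15: "h (P 1) \<in> {P 1}" by (rule ac_rev[OF f6 f14 C[of "(P 1)" "(P 2)"]]) (simp_all add: XS)
  show ?thesis using f0 f15 f14 f13 f10 f12 by (auto simp: XS )
qed

lemma rig_tau:
  fixes h :: "_ \<Rightarrow> pt"
  assumes V: "\<And>p. p \<in> verts (np1 Xex Xex) \<Longrightarrow> h p \<in> Xverts"
    and C: "\<And>p q. p \<in> verts (np1 Xex Xex) \<Longrightarrow> q \<in> verts (np1 Xex Xex) \<Longrightarrow> adj (np1 Xex Xex) p q \<Longrightarrow> adj Xex (h p) (h q)"
    and B: "h (P 0, P 0) = P 0"
    and N: "\<And>p. p \<in> verts (np1 Xex Xex) \<Longrightarrow> adj Xex (h p) (tau p)"
  shows "\<forall>p\<in>verts (np1 Xex Xex). h p = tau p"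
proof -
  have f0: "h (P 0, P 0) \<in> {P 0}" using B by simp
  have f1: "h (P 0, P 1) \<in> {P 0, P 1, P 2}" by (rule ac_init[OF V[of "(P 0, P 1)"] N[of "(P 0, P 1)"]]) (simp_all add: XS )
  have f2: "h (P 0, P 2) \<in> {P 1, P 2, P 3}" by (rule ac_init[OF V[of "(P 0, P 2)"] N[of "(P 0, P 2)"]]) (simp_all add: XS )
  have f3: "h (P 0, P 3) \<in> {P 2, P 3, P 4, Pbar}" by (rule ac_init[OF V[of "(P 0, P 3)"] N[of "(P 0, P 3)"]]) (simp_all add: XS )
  have f4: "h (P 0, P 4) \<in> {P 0, P 3, P 4}" by (rule ac_init[OF V[of "(P 0, P 4)"] N[of "(P 0, P 4)"]]) (simp_all add: XS )
  have f5: "h (P 0, Pbar) \<in> {P 0, P 3, Pbar}" by (rule ac_init[OF V[of "(P 0, Pbar)"] N[of "(P 0, Pbar)"]]) (simp_all add: XS )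
  have f6: "h (P 1, P 0) \<in> {P 0, P 1, P 2}" by (rule ac_init[OF V[of "(P 1, P 0)"] N[of "(P 1, P 0)"]]) (simp_all add: XS )
  have f7: "h (P 1, P 1) \<in> {P 1, P 2, P 3}" by (rule ac_init[OF V[of "(P 1, P 1)"] N[of "(P 1, P 1)"]]) (simp_all add: XS )
  have f8: "h (P 1, P 2) \<in> {P 2, P 3, P 4, Pbar}" by (rule ac_init[OF V[of "(P 1, P 2)"] N[of "(P 1, P 2)"]]) (simp_all add: XS )
  have f9: "h (P 1, P 3) \<in> {P 0, P 3, P 4}" by (rule ac_init[OF V[of "(P 1, P 3)"] N[of "(P 1, P 3)"]]) (simp_all add: XS )
  have f10: "h (P 1, P 4) \<in> {P 0, P 1, P 4, Pbar}" by (rule ac_init[OF V[of "(P 1, P 4)"] N[of "(P 1, P 4)"]]) (simp_all add: XS )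
  have f11: "h (P 1, Pbar) \<in> {P 0, P 1, P 4, Pbar}" by (rule ac_init[OF V[of "(P 1, Pbar)"] N[of "(P 1, Pbar)"]]) (simp_all add: XS )
  have f12: "h (P 2, P 0) \<in> {P 1, P 2, P 3}" by (rule ac_init[OF V[of "(P 2, P 0)"] N[of "(P 2, P 0)"]]) (simp_all add: XS )
  have f13: "h (P 2, P 1) \<in> {P 2, P 3, P 4, Pbar}" by (rule ac_init[OF V[of "(P 2, P 1)"] N[of "(P 2, P 1)"]]) (simp_all add: XS )
  have f14: "h (P 2, P 2) \<in> {P 0, P 3, P 4}" by (rule ac_init[OF V[of "(P 2, P 2)"] N[of "(P 2, P 2)"]]) (simp_all add: XS )
  have f15: "h (P 2, P 3) \<in> {P 0, P 1, P 4, Pbar}" by (rule ac_init[OF V[of "(P 2, P 3)"] N[of "(P 2, P 3)"]]) (simp_all add: XS )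
  have f16: "h (P 2, P 4) \<in> {P 0, P 1, P 2}" by (rule ac_init[OF V[of "(P 2, P 4)"] N[of "(P 2, P 4)"]]) (simp_all add: XS )
  have f17: "h (P 2, Pbar) \<in> {P 0, P 1, P 2}" by (rule ac_init[OF V[of "(P 2, Pbar)"] N[of "(P 2, Pbar)"]]) (simp_all add: XS )
  have f18: "h (P 3, P 0) \<in> {P 2, P 3, P 4, Pbar}" by (rule ac_init[OF V[of "(P 3, P 0)"] N[of "(P 3, P 0)"]]) (simp_all add: XS )
  have f19: "h (P 3, P 1) \<in> {P 0, P 3, P 4}" by (rule ac_init[OF V[of "(P 3, P 1)"] N[of "(P 3, P 1)"]]) (simp_all add: XS )
  have f20: "h (P 3, P 2) \<in> {P 0, P 1, P 4, Pbar}" by (rule ac_init[OF V[of "(P 3, P 2)"] N[of "(P 3, P 2)"]]) (simp_all add: XS )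
  have f21: "h (P 3, P 3) \<in> {P 0, P 1, P 2}" by (rule ac_init[OF V[of "(P 3, P 3)"] N[of "(P 3, P 3)"]]) (simp_all add: XS )
  have f22: "h (P 3, P 4) \<in> {P 1, P 2, P 3}" by (rule ac_init[OF V[of "(P 3, P 4)"] N[of "(P 3, P 4)"]]) (simp_all add: XS )
  have f23: "h (P 3, Pbar) \<in> {P 1, P 2, P 3}" by (rule ac_init[OF V[of "(P 3, Pbar)"] N[of "(P 3, Pbar)"]]) (simp_all add: XS )
  have f24: "h (P 4, P 0) \<in> {P 0, P 3, P 4}" by (rule ac_init[OF V[of "(P 4, P 0)"] N[of "(P 4, P 0)"]]) (simp_all add: XS )
  have f25: "h (P 4, P 1) \<in> {P 0, P 1, P 4, Pbar}" by (rule ac_init[OF V[of "(P 4, P 1)"] N[of "(P 4, P 1)"]]) (simp_all add: XS )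
  have f26: "h (P 4, P 2) \<in> {P 0, P 1, P 2}" by (rule ac_init[OF V[of "(P 4, P 2)"] N[of "(P 4, P 2)"]]) (simp_all add: XS )
  have f27: "h (P 4, P 3) \<in> {P 1, P 2, P 3}" by (rule ac_init[OF V[of "(P 4, P 3)"] N[of "(P 4, P 3)"]]) (simp_all add: XS )
  have f28: "h (P 4, P 4) \<in> {P 2, P 3, P 4, Pbar}" by (rule ac_init[OF V[of "(P 4, P 4)"] N[of "(P 4, P 4)"]]) (simp_all add: XS )
  have f29: "h (P 4, Pbar) \<in> {P 2, P 3, P 4, Pbar}" by (rule ac_init[OF V[of "(P 4, Pbar)"] N[of "(P 4, Pbar)"]]) (simp_all add: XS )
  have f30: "h (Pbar, P 0) \<in> {P 0, P 3, Pbar}" by (rule ac_init[OF V[of "(Pbar, P 0)"] N[of "(Pbar, P 0)"]]) (simp_all add: XS )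
  have f31: "h (Pbar, P 1) \<in> {P 0, P 1, P 4, Pbar}" by (rule ac_init[OF V[of "(Pbar, P 1)"] N[of "(Pbar, P 1)"]]) (simp_all add: XS )
  have f32: "h (Pbar, P 2) \<in> {P 0, P 1, P 2}" by (rule ac_init[OF V[of "(Pbar, P 2)"] N[of "(Pbar, P 2)"]]) (simp_all add: XS )
  have f33: "h (Pbar, P 3) \<in> {P 1, P 2, P 3}" by (rule ac_init[OF V[of "(Pbar, P 3)"] N[of "(Pbar, P 3)"]]) (simp_all add: XS )
  have f34: "h (Pbar, P 4) \<in> {P 2, P 3, P 4, Pbar}" by (rule ac_init[OF V[of "(Pbar, P 4)"] N[of "(Pbar, P 4)"]]) (simp_all add: XS )
  have f35: "h (Pbar, Pbar) \<in> {P 2, P 3, P 4, Pbar}" by (rule ac_init[OF V[of "(Pbar, Pbar)"] N[of "(Pbar, Pbar)"]]) (simp_all add: XS )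
  have f36: "h (P 0, P 1) \<in> {P 0, P 1}" by (rule ac_rev[OF f1 f0 C[of "(P 0, P 1)" "(P 0, P 0)"]]) (simp_all add: XS)
  have f37: "h (P 0, P 2) \<in> {P 1, P 2}" by (rule ac_rev[OF f2 f36 C[of "(P 0, P 2)" "(P 0, P 1)"]]) (simp_all add: XS)
  have f38: "h (P 0, P 3) \<in> {P 2, P 3}" by (rule ac_rev[OF f3 f37 C[of "(P 0, P 3)" "(P 0, P 2)"]]) (simp_all add: XS)
  have f39: "h (P 0, P 4) \<in> {P 0, P 4}" by (rule ac_rev[OF f4 f0 C[of "(P 0, P 4)" "(P 0, P 0)"]]) (simp_all add: XS)
  have f40: "h (P 0, P 4) \<in> {P 4}" by (rule ac_rev[OF f39 f38 C[of "(P 0, P 4)" "(P 0, P 3)"]]) (simp_all add: XS)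
  have f41: "h (P 0, Pbar) \<in> {P 0, Pbar}" by (rule ac_rev[OF f5 f0 C[of "(P 0, Pbar)" "(P 0, P 0)"]]) (simp_all add: XS)
  have f42: "h (P 0, Pbar) \<in> {Pbar}" by (rule ac_rev[OF f41 f38 C[of "(P 0, Pbar)" "(P 0, P 3)"]]) (simp_all add: XS)
  have f43: "h (P 1, P 0) \<in> {P 0, P 1}" by (rule ac_rev[OF f6 f0 C[of "(P 1, P 0)" "(P 0, P 0)"]]) (simp_all add: XS)
  have f44: "h (P 1, P 1) \<in> {P 1, P 2}" by (rule ac_rev[OF f7 f36 C[of "(P 1, P 1)" "(P 0, P 1)"]]) (simp_all add: XS)
  have f45: "h (P 1, P 2) \<in> {P 2, P 3}" by (rule ac_rev[OF f8 f37 C[of "(P 1, P 2)" "(P 0, P 2)"]]) (simp_all add: XS)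
  have f46: "h (P 1, P 3) \<in> {P 3, P 4}" by (rule ac_rev[OF f9 f38 C[of "(P 1, P 3)" "(P 0, P 3)"]]) (simp_all add: XS)
  have f47: "h (P 1, P 4) \<in> {P 0, P 4}" by (rule ac_rev[OF f10 f40 C[of "(P 1, P 4)" "(P 0, P 4)"]]) (simp_all add: XS)
  have f48: "h (P 1, Pbar) \<in> {P 0, Pbar}" by (rule ac_rev[OF f11 f42 C[of "(P 1, Pbar)" "(P 0, Pbar)"]]) (simp_all add: XS)
  have f49: "h (P 2, P 0) \<in> {P 1, P 2}" by (rule ac_rev[OF f12 f43 C[of "(P 2, P 0)" "(P 1, P 0)"]]) (simp_all add: XS)
  have f50: "h (P 2, P 1) \<in> {P 2, P 3}" by (rule ac_rev[OF f13 f44 C[of "(P 2, P 1)" "(P 1, P 1)"]]) (simp_all add: XS)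
  have f51: "h (P 2, P 2) \<in> {P 3, P 4}" by (rule ac_rev[OF f14 f45 C[of "(P 2, P 2)" "(P 1, P 2)"]]) (simp_all add: XS)
  have f52: "h (P 2, P 3) \<in> {P 0, P 4, Pbar}" by (rule ac_rev[OF f15 f46 C[of "(P 2, P 3)" "(P 1, P 3)"]]) (simp_all add: XS)
  have f53: "h (P 2, P 4) \<in> {P 0, P 1}" by (rule ac_rev[OF f16 f47 C[of "(P 2, P 4)" "(P 1, P 4)"]]) (simp_all add: XS)
  have f54: "h (P 2, Pbar) \<in> {P 0, P 1}" by (rule ac_rev[OF f17 f48 C[of "(P 2, Pbar)" "(P 1, Pbar)"]]) (simp_all add: XS)
  have f55: "h (P 3, P 0) \<in> {P 2, P 3}" by (rule ac_rev[OF f18 f49 C[of "(P 3, P 0)" "(P 2, P 0)"]]) (simp_all add: XS)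
  have f56: "h (P 3, P 1) \<in> {P 3, P 4}" by (rule ac_rev[OF f19 f50 C[of "(P 3, P 1)" "(P 2, P 1)"]]) (simp_all add: XS)
  have f57: "h (P 3, P 2) \<in> {P 0, P 4, Pbar}" by (rule ac_rev[OF f20 f51 C[of "(P 3, P 2)" "(P 2, P 2)"]]) (simp_all add: XS)
  have f58: "h (P 3, P 3) \<in> {P 0, P 1}" by (rule ac_rev[OF f21 f52 C[of "(P 3, P 3)" "(P 2, P 3)"]]) (simp_all add: XS)
  have f59: "h (P 3, P 4) \<in> {P 1, P 2}" by (rule ac_rev[OF f22 f53 C[of "(P 3, P 4)" "(P 2, P 4)"]]) (simp_all add: XS)
  have f60: "h (P 3, Pbar) \<in> {P 1, P 2}" by (rule ac_rev[OF f23 f54 C[of "(P 3, Pbar)" "(P 2, Pbar)"]]) (simp_all add: XS)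
  have f61: "h (P 4, P 0) \<in> {P 0, P 4}" by (rule ac_rev[OF f24 f0 C[of "(P 4, P 0)" "(P 0, P 0)"]]) (simp_all add: XS)
  have f62: "h (P 4, P 0) \<in> {P 4}" by (rule ac_rev[OF f61 f55 C[of "(P 4, P 0)" "(P 3, P 0)"]]) (simp_all add: XS)
  have f63: "h (P 4, P 1) \<in> {P 0, P 4, Pbar}" by (rule ac_rev[OF f25 f56 C[of "(P 4, P 1)" "(P 3, P 1)"]]) (simp_all add: XS)
  have f64: "h (P 4, P 1) \<in> {P 0, P 4}" by (rule ac_rev[OF f63 f62 C[of "(P 4, P 1)" "(P 4, P 0)"]]) (simp_all add: XS)
  have f65: "h (P 4, P 2) \<in> {P 0, P 1}" by (rule ac_rev[OF f26 f57 C[of "(P 4, P 2)" "(P 3, P 2)"]]) (simp_all add: XS)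
  have f66: "h (P 4, P 3) \<in> {P 1, P 2}" by (rule ac_rev[OF f27 f58 C[of "(P 4, P 3)" "(P 3, P 3)"]]) (simp_all add: XS)
  have f67: "h (P 4, P 4) \<in> {P 3, P 4}" by (rule ac_rev[OF f28 f40 C[of "(P 4, P 4)" "(P 0, P 4)"]]) (simp_all add: XS)
  have f68: "h (P 4, P 4) \<in> {P 3}" by (rule ac_rev[OF f67 f59 C[of "(P 4, P 4)" "(P 3, P 4)"]]) (simp_all add: XS)
  have f69: "h (P 4, Pbar) \<in> {P 3, Pbar}" by (rule ac_rev[OF f29 f42 C[of "(P 4, Pbar)" "(P 0, Pbar)"]]) (simp_all add: XS)
  have f70: "h (P 4, Pbar) \<in> {P 3}" by (rule ac_rev[OF f69 f60 C[of "(P 4, Pbar)" "(P 3, Pbar)"]]) (simp_all add: XS)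
  have f71: "h (Pbar, P 0) \<in> {P 0, Pbar}" by (rule ac_rev[OF f30 f0 C[of "(Pbar, P 0)" "(P 0, P 0)"]]) (simp_all add: XS)
  have f72: "h (Pbar, P 0) \<in> {Pbar}" by (rule ac_rev[OF f71 f55 C[of "(Pbar, P 0)" "(P 3, P 0)"]]) (simp_all add: XS)
  have f73: "h (Pbar, P 1) \<in> {P 0, P 4, Pbar}" by (rule ac_rev[OF f31 f56 C[of "(Pbar, P 1)" "(P 3, P 1)"]]) (simp_all add: XS)
  have f74: "h (Pbar, P 1) \<in> {P 0, Pbar}" by (rule ac_rev[OF f73 f72 C[of "(Pbar, P 1)" "(Pbar, P 0)"]]) (simp_all add: XS)
  have f75: "h (Pbar, P 2) \<in> {P 0, P 1}" by (rule ac_rev[OF f32 f57 C[of "(Pbar, P 2)" "(P 3, P 2)"]]) (simp_all add: XS)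
  have f76: "h (Pbar, P 3) \<in> {P 1, P 2}" by (rule ac_rev[OF f33 f58 C[of "(Pbar, P 3)" "(P 3, P 3)"]]) (simp_all add: XS)
  have f77: "h (Pbar, P 4) \<in> {P 3, P 4}" by (rule ac_rev[OF f34 f40 C[of "(Pbar, P 4)" "(P 0, P 4)"]]) (simp_all add: XS)
  have f78: "h (Pbar, P 4) \<in> {P 3}" by (rule ac_rev[OF f77 f59 C[of "(Pbar, P 4)" "(P 3, P 4)"]]) (simp_all add: XS)
  have f79: "h (Pbar, Pbar) \<in> {P 3, Pbar}" by (rule ac_rev[OF f35 f42 C[of "(Pbar, Pbar)" "(P 0, Pbar)"]]) (simp_all add: XS)
  have f80: "h (Pbar, Pbar) \<in> {P 3}" by (rule ac_rev[OF f79 f60 C[of "(Pbar, Pbar)" "(P 3, Pbar)"]]) (simp_all add: XS)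
  have f81: "h (P 0, P 3) \<in> {P 3}" by (rule ac_rev[OF f38 f40 C[of "(P 0, P 3)" "(P 0, P 4)"]]) (simp_all add: XS)
  have f82: "h (P 3, P 0) \<in> {P 3}" by (rule ac_rev[OF f55 f62 C[of "(P 3, P 0)" "(P 4, P 0)"]]) (simp_all add: XS)
  have f83: "h (P 3, P 4) \<in> {P 2}" by (rule ac_rev[OF f59 f82 C[of "(P 3, P 4)" "(P 3, P 0)"]]) (simp_all add: XS)
  have f84: "h (P 3, Pbar) \<in> {P 2}" by (rule ac_rev[OF f60 f82 C[of "(P 3, Pbar)" "(P 3, P 0)"]]) (simp_all add: XS)
  have f85: "h (P 4, P 3) \<in> {P 2}" by (rule ac_rev[OF f66 f81 C[of "(P 4, P 3)" "(P 0, P 3)"]]) (simp_all add: XS)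
  have f86: "h (Pbar, P 3) \<in> {P 2}" by (rule ac_rev[OF f76 f81 C[of "(Pbar, P 3)" "(P 0, P 3)"]]) (simp_all add: XS)
  have f87: "h (P 0, P 2) \<in> {P 2}" by (rule ac_rev[OF f37 f81 C[of "(P 0, P 2)" "(P 0, P 3)"]]) (simp_all add: XS)
  have f88: "h (P 2, P 0) \<in> {P 2}" by (rule ac_rev[OF f49 f82 C[of "(P 2, P 0)" "(P 3, P 0)"]]) (simp_all add: XS)
  have f89: "h (P 2, P 4) \<in> {P 1}" by (rule ac_rev[OF f53 f88 C[of "(P 2, P 4)" "(P 2, P 0)"]]) (simp_all add: XS)
  have f90: "h (P 2, Pbar) \<in> {P 1}" by (rule ac_rev[OF f54 f88 C[of "(P 2, Pbar)" "(P 2, P 0)"]]) (simp_all add: XS)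
  have f91: "h (P 3, P 3) \<in> {P 1}" by (rule ac_rev[OF f58 f83 C[of "(P 3, P 3)" "(P 3, P 4)"]]) (simp_all add: XS)
  have f92: "h (P 4, P 2) \<in> {P 1}" by (rule ac_rev[OF f65 f87 C[of "(P 4, P 2)" "(P 0, P 2)"]]) (simp_all add: XS)
  have f93: "h (Pbar, P 2) \<in> {P 1}" by (rule ac_rev[OF f75 f87 C[of "(Pbar, P 2)" "(P 0, P 2)"]]) (simp_all add: XS)
  have f94: "h (P 0, P 1) \<in> {P 1}" by (rule ac_rev[OF f36 f87 C[of "(P 0, P 1)" "(P 0, P 2)"]]) (simp_all add: XS)
  have f95: "h (P 1, P 0) \<in> {P 1}" by (rule ac_rev[OF f43 f88 C[of "(P 1, P 0)" "(P 2, P 0)"]]) (simp_all add: XS)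
  have f96: "h (P 1, P 4) \<in> {P 0}" by (rule ac_rev[OF f47 f95 C[of "(P 1, P 4)" "(P 1, P 0)"]]) (simp_all add: XS)
  have f97: "h (P 1, Pbar) \<in> {P 0}" by (rule ac_rev[OF f48 f95 C[of "(P 1, Pbar)" "(P 1, P 0)"]]) (simp_all add: XS)
  have f98: "h (P 2, P 3) \<in> {P 0}" by (rule ac_rev[OF f52 f89 C[of "(P 2, P 3)" "(P 2, P 4)"]]) (simp_all add: XS)
  have f99: "h (P 3, P 2) \<in> {P 0}" by (rule ac_rev[OF f57 f91 C[of "(P 3, P 2)" "(P 3, P 3)"]]) (simp_all add: XS)
  have f100: "h (P 4, P 1) \<in> {P 0}" by (rule ac_rev[OF f64 f94 C[of "(P 4, P 1)" "(P 0, P 1)"]]) (simp_all add: XS)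
  have f101: "h (Pbar, P 1) \<in> {P 0}" by (rule ac_rev[OF f74 f94 C[of "(Pbar, P 1)" "(P 0, P 1)"]]) (simp_all add: XS)
  have f102: "h (P 1, P 3) \<in> {P 4}" by (rule ac_rev[OF f46 f96 C[of "(P 1, P 3)" "(P 1, P 4)"]]) (simp_all add: XS)
  have f103: "h (P 2, P 2) \<in> {P 4}" by (rule ac_rev[OF f51 f98 C[of "(P 2, P 2)" "(P 2, P 3)"]]) (simp_all add: XS)
  have f104: "h (P 3, P 1) \<in> {P 4}" by (rule ac_rev[OF f56 f99 C[of "(P 3, P 1)" "(P 3, P 2)"]]) (simp_all add: XS)
  have f105: "h (P 1, P 2) \<in> {P 3}" by (rule ac_rev[OF f45 f102 C[of "(P 1, P 2)" "(P 1, P 3)"]]) (simp_all add: XS)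
  have f106: "h (P 2, P 1) \<in> {P 3}" by (rule ac_rev[OF f50 f103 C[of "(P 2, P 1)" "(P 2, P 2)"]]) (simp_all add: XS)
  have f107: "h (P 1, P 1) \<in> {P 2}" by (rule ac_rev[OF f44 f105 C[of "(P 1, P 1)" "(P 1, P 2)"]]) (simp_all add: XS)
  show ?thesis using f0 f94 f87 f81 f40 f42 f95 f107 f105 f102 f96 f97 f88 f106 f103 f98 f89 f90 f82 f104 f99 f91 f83 f84 f62 f100 f92 f85 f68 f70 f72 f101 f93 f86 f78 f80 by (auto simp: XS )
qed

definition Z1 :: "(pt \<times> pt \<times> pt) set" where
  "Z1 = {(P 0, P 0, P 0), (P 0, P 0, P 1), (P 0, P 0, P 2), (P 0, P 0, P 3), (P 0, P 0, P 4), (P 0, P 0, Pbar), (P 0, P 1, P 0), (P 0, P 1, Pbar), (P 0, P 2, P 0), (P 0, P 2, Pbar), (P 0, P 3, P 0), (P 0, P 3, Pbar), (P 0, P 4, P 0), (P 0, Pbar, Pbar), (P 1, P 0, P 0), (P 1, P 0, Pbar), (P 1, Pbar, Pbar), (P 2, P 0, P 0), (P 3, P 0, P 0), (P 4, P 0, P 0)}"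
lemma rig_F1:
  fixes h :: "_ \<Rightarrow> pt"
  assumes V: "\<And>p. p \<in> verts (np1 Xex (np1 Xex Xex)) \<Longrightarrow> h p \<in> Xverts"
    and C: "\<And>p q. p \<in> verts (np1 Xex (np1 Xex Xex)) \<Longrightarrow> q \<in> verts (np1 Xex (np1 Xex Xex)) \<Longrightarrow> adj (np1 Xex (np1 Xex Xex)) p q \<Longrightarrow> adj Xex (h p) (h q)"
    and B: "h (P 0, P 0, P 0) = P 0"
    and N: "\<And>p. p \<in> Z1 \<Longrightarrow> adj Xex (h p) (F1 p)"
  shows "\<forall>p\<in>Z1. h p = F1 p"
proof -
  have f0: "h (P 0, P 0, P 0) \<in> {P 0}" using B by simp
  have f1: "h (P 0, P 0, P 1) \<in> {P 0, P 1, P 2}" by (rule ac_init[OF V[of "(P 0, P 0, P 1)"] N[of "(P 0, P 0, P 1)"]]) (simp_all add: XS Z1_def)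
  have f2: "h (P 0, P 0, P 2) \<in> {P 1, P 2, P 3}" by (rule ac_init[OF V[of "(P 0, P 0, P 2)"] N[of "(P 0, P 0, P 2)"]]) (simp_all add: XS Z1_def)
  have f3: "h (P 0, P 0, P 3) \<in> {P 2, P 3, P 4, Pbar}" by (rule ac_init[OF V[of "(P 0, P 0, P 3)"] N[of "(P 0, P 0, P 3)"]]) (simp_all add: XS Z1_def)
  have f4: "h (P 0, P 0, P 4) \<in> {P 0, P 3, P 4}" by (rule ac_init[OF V[of "(P 0, P 0, P 4)"] N[of "(P 0, P 0, P 4)"]]) (simp_all add: XS Z1_def)
  have f5: "h (P 0, P 0, Pbar) \<in> {P 0, P 3, Pbar}" by (rule ac_init[OF V[of "(P 0, P 0, Pbar)"] N[of "(P 0, P 0, Pbar)"]]) (simp_all add: XS Z1_def)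
  have f6: "h (P 0, P 1, P 0) \<in> {P 0, P 1, P 2}" by (rule ac_init[OF V[of "(P 0, P 1, P 0)"] N[of "(P 0, P 1, P 0)"]]) (simp_all add: XS Z1_def)
  have f11: "h (P 0, P 1, Pbar) \<in> {P 0, P 1, P 4, Pbar}" by (rule ac_init[OF V[of "(P 0, P 1, Pbar)"] N[of "(P 0, P 1, Pbar)"]]) (simp_all add: XS Z1_def)
  have f12: "h (P 0, P 2, P 0) \<in> {P 1, P 2, P 3}" by (rule ac_init[OF V[of "(P 0, P 2, P 0)"] N[of "(P 0, P 2, P 0)"]]) (simp_all add: XS Z1_def)
  have f17: "h (P 0, P 2, Pbar) \<in> {P 0, P 1, P 2}" by (rule ac_init[OF V[of "(P 0, P 2, Pbar)"] N[of "(P 0, P 2, Pbar)"]]) (simp_all add: XS Z1_def)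
  have f18: "h (P 0, P 3, P 0) \<in> {P 2, P 3, P 4, Pbar}" by (rule ac_init[OF V[of "(P 0, P 3, P 0)"] N[of "(P 0, P 3, P 0)"]]) (simp_all add: XS Z1_def)
  have f23: "h (P 0, P 3, Pbar) \<in> {P 1, P 2, P 3}" by (rule ac_init[OF V[of "(P 0, P 3, Pbar)"] N[of "(P 0, P 3, Pbar)"]]) (simp_all add: XS Z1_def)
  have f24: "h (P 0, P 4, P 0) \<in> {P 0, P 3, P 4}" by (rule ac_init[OF V[of "(P 0, P 4, P 0)"] N[of "(P 0, P 4, P 0)"]]) (simp_all add: XS Z1_def)
  have f35: "h (P 0, Pbar, Pbar) \<in> {P 2, P 3, P 4, Pbar}" by (rule ac_init[OF V[of "(P 0, Pbar, Pbar)"] N[of "(P 0, Pbar, Pbar)"]]) (simp_all add: XS Z1_def)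
  have f36: "h (P 1, P 0, P 0) \<in> {P 0, P 1, P 2}" by (rule ac_init[OF V[of "(P 1, P 0, P 0)"] N[of "(P 1, P 0, P 0)"]]) (simp_all add: XS Z1_def)
  have f41: "h (P 1, P 0, Pbar) \<in> {P 0, P 1, P 4, Pbar}" by (rule ac_init[OF V[of "(P 1, P 0, Pbar)"] N[of "(P 1, P 0, Pbar)"]]) (simp_all add: XS Z1_def)
  have f71: "h (P 1, Pbar, Pbar) \<in> {P 0, P 3, P 4}" by (rule ac_init[OF V[of "(P 1, Pbar, Pbar)"] N[of "(P 1, Pbar, Pbar)"]]) (simp_all add: XS Z1_def)
  have f72: "h (P 2, P 0, P 0) \<in> {P 1, P 2, P 3}" by (rule ac_init[OF V[of "(P 2, P 0, P 0)"] N[of "(P 2, P 0, P 0)"]]) (simp_all add: XS Z1_def)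
  have f108: "h (P 3, P 0, P 0) \<in> {P 2, P 3, P 4, Pbar}" by (rule ac_init[OF V[of "(P 3, P 0, P 0)"] N[of "(P 3, P 0, P 0)"]]) (simp_all add: XS Z1_def)
  have f144: "h (P 4, P 0, P 0) \<in> {P 0, P 3, P 4}" by (rule ac_init[OF V[of "(P 4, P 0, P 0)"] N[of "(P 4, P 0, P 0)"]]) (simp_all add: XS Z1_def)
  have f216: "h (P 0, P 0, P 1) \<in> {P 0, P 1}" by (rule ac_rev[OF f1 f0 C[of "(P 0, P 0, P 1)" "(P 0, P 0, P 0)"]]) (simp_all add: XS)
  have f217: "h (P 0, P 0, P 2) \<in> {P 1, P 2}" by (rule ac_rev[OF f2 f216 C[of "(P 0, P 0, P 2)" "(P 0, P 0, P 1)"]]) (simp_all add: XS)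
  have f218: "h (P 0, P 0, P 3) \<in> {P 2, P 3}" by (rule ac_rev[OF f3 f217 C[of "(P 0, P 0, P 3)" "(P 0, P 0, P 2)"]]) (simp_all add: XS)
  have f219: "h (P 0, P 0, P 4) \<in> {P 0, P 4}" by (rule ac_rev[OF f4 f0 C[of "(P 0, P 0, P 4)" "(P 0, P 0, P 0)"]]) (simp_all add: XS)
  have f220: "h (P 0, P 0, P 4) \<in> {P 4}" by (rule ac_rev[OF f219 f218 C[of "(P 0, P 0, P 4)" "(P 0, P 0, P 3)"]]) (simp_all add: XS)
  have f221: "h (P 0, P 0, Pbar) \<in> {P 0, Pbar}" by (rule ac_rev[OF f5 f0 C[of "(P 0, P 0, Pbar)" "(P 0, P 0, P 0)"]]) (simp_all add: XS)
  have f222: "h (P 0, P 0, Pbar) \<in> {Pbar}" by (rule ac_rev[OF f221 f218 C[of "(P 0, P 0, Pbar)" "(P 0, P 0, P 3)"]]) (simp_all add: XS)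
  have f223: "h (P 0, P 1, P 0) \<in> {P 0, P 1}" by (rule ac_rev[OF f6 f0 C[of "(P 0, P 1, P 0)" "(P 0, P 0, P 0)"]]) (simp_all add: XS)
  have f228: "h (P 0, P 1, Pbar) \<in> {P 0, Pbar}" by (rule ac_rev[OF f11 f222 C[of "(P 0, P 1, Pbar)" "(P 0, P 0, Pbar)"]]) (simp_all add: XS)
  have f229: "h (P 0, P 2, P 0) \<in> {P 1, P 2}" by (rule ac_rev[OF f12 f223 C[of "(P 0, P 2, P 0)" "(P 0, P 1, P 0)"]]) (simp_all add: XS)
  have f234: "h (P 0, P 2, Pbar) \<in> {P 0, P 1}" by (rule ac_rev[OF f17 f228 C[of "(P 0, P 2, Pbar)" "(P 0, P 1, Pbar)"]]) (simp_all add: XS)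
  have f235: "h (P 0, P 3, P 0) \<in> {P 2, P 3}" by (rule ac_rev[OF f18 f229 C[of "(P 0, P 3, P 0)" "(P 0, P 2, P 0)"]]) (simp_all add: XS)
  have f240: "h (P 0, P 3, Pbar) \<in> {P 1, P 2}" by (rule ac_rev[OF f23 f234 C[of "(P 0, P 3, Pbar)" "(P 0, P 2, Pbar)"]]) (simp_all add: XS)
  have f241: "h (P 0, P 4, P 0) \<in> {P 0, P 4}" by (rule ac_rev[OF f24 f0 C[of "(P 0, P 4, P 0)" "(P 0, P 0, P 0)"]]) (simp_all add: XS)
  have f242: "h (P 0, P 4, P 0) \<in> {P 4}" by (rule ac_rev[OF f241 f235 C[of "(P 0, P 4, P 0)" "(P 0, P 3, P 0)"]]) (simp_all add: XS)
  have f259: "h (P 0, Pbar, Pbar) \<in> {P 3, Pbar}" by (rule ac_rev[OF f35 f222 C[of "(P 0, Pbar, Pbar)" "(P 0, P 0, Pbar)"]]) (simp_all add: XS)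
  have f260: "h (P 0, Pbar, Pbar) \<in> {P 3}" by (rule ac_rev[OF f259 f240 C[of "(P 0, Pbar, Pbar)" "(P 0, P 3, Pbar)"]]) (simp_all add: XS)
  have f261: "h (P 1, P 0, P 0) \<in> {P 0, P 1}" by (rule ac_rev[OF f36 f0 C[of "(P 1, P 0, P 0)" "(P 0, P 0, P 0)"]]) (simp_all add: XS)
  have f266: "h (P 1, P 0, Pbar) \<in> {P 0, Pbar}" by (rule ac_rev[OF f41 f222 C[of "(P 1, P 0, Pbar)" "(P 0, P 0, Pbar)"]]) (simp_all add: XS)
  have f296: "h (P 1, Pbar, Pbar) \<in> {P 3, P 4}" by (rule ac_rev[OF f71 f260 C[of "(P 1, Pbar, Pbar)" "(P 0, Pbar, Pbar)"]]) (simp_all add: XS)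
  have f297: "h (P 2, P 0, P 0) \<in> {P 1, P 2}" by (rule ac_rev[OF f72 f261 C[of "(P 2, P 0, P 0)" "(P 1, P 0, P 0)"]]) (simp_all add: XS)
  have f333: "h (P 3, P 0, P 0) \<in> {P 2, P 3}" by (rule ac_rev[OF f108 f297 C[of "(P 3, P 0, P 0)" "(P 2, P 0, P 0)"]]) (simp_all add: XS)
  have f369: "h (P 4, P 0, P 0) \<in> {P 0, P 4}" by (rule ac_rev[OF f144 f0 C[of "(P 4, P 0, P 0)" "(P 0, P 0, P 0)"]]) (simp_all add: XS)
  have f370: "h (P 4, P 0, P 0) \<in> {P 4}" by (rule ac_rev[OF f369 f333 C[of "(P 4, P 0, P 0)" "(P 3, P 0, P 0)"]]) (simp_all add: XS)
  have f463: "h (P 0, P 0, P 3) \<in> {P 3}" by (rule ac_rev[OF f218 f220 C[of "(P 0, P 0, P 3)" "(P 0, P 0, P 4)"]]) (simp_all add: XS)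
  have f464: "h (P 0, P 3, P 0) \<in> {P 3}" by (rule ac_rev[OF f235 f242 C[of "(P 0, P 3, P 0)" "(P 0, P 4, P 0)"]]) (simp_all add: XS)
  have f466: "h (P 0, P 3, Pbar) \<in> {P 2}" by (rule ac_rev[OF f240 f464 C[of "(P 0, P 3, Pbar)" "(P 0, P 3, P 0)"]]) (simp_all add: XS)
  have f469: "h (P 3, P 0, P 0) \<in> {P 3}" by (rule ac_rev[OF f333 f370 C[of "(P 3, P 0, P 0)" "(P 4, P 0, P 0)"]]) (simp_all add: XS)
  have f490: "h (P 0, P 0, P 2) \<in> {P 2}" by (rule ac_rev[OF f217 f463 C[of "(P 0, P 0, P 2)" "(P 0, P 0, P 3)"]]) (simp_all add: XS)
  have f491: "h (P 0, P 2, P 0) \<in> {P 2}" by (rule ac_rev[OF f229 f464 C[of "(P 0, P 2, P 0)" "(P 0, P 3, P 0)"]]) (simp_all add: XS)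
  have f493: "h (P 0, P 2, Pbar) \<in> {P 1}" by (rule ac_rev[OF f234 f491 C[of "(P 0, P 2, Pbar)" "(P 0, P 2, P 0)"]]) (simp_all add: XS)
  have f497: "h (P 2, P 0, P 0) \<in> {P 2}" by (rule ac_rev[OF f297 f469 C[of "(P 2, P 0, P 0)" "(P 3, P 0, P 0)"]]) (simp_all add: XS)
  have f526: "h (P 0, P 0, P 1) \<in> {P 1}" by (rule ac_rev[OF f216 f490 C[of "(P 0, P 0, P 1)" "(P 0, P 0, P 2)"]]) (simp_all add: XS)
  have f527: "h (P 0, P 1, P 0) \<in> {P 1}" by (rule ac_rev[OF f223 f491 C[of "(P 0, P 1, P 0)" "(P 0, P 2, P 0)"]]) (simp_all add: XS)
  have f529: "h (P 0, P 1, Pbar) \<in> {P 0}" by (rule ac_rev[OF f228 f527 C[of "(P 0, P 1, Pbar)" "(P 0, P 1, P 0)"]]) (simp_all add: XS)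
  have f534: "h (P 1, P 0, P 0) \<in> {P 1}" by (rule ac_rev[OF f261 f497 C[of "(P 1, P 0, P 0)" "(P 2, P 0, P 0)"]]) (simp_all add: XS)
  have f536: "h (P 1, P 0, Pbar) \<in> {P 0}" by (rule ac_rev[OF f266 f534 C[of "(P 1, P 0, Pbar)" "(P 1, P 0, P 0)"]]) (simp_all add: XS)
  have f542: "h (P 1, Pbar, Pbar) \<in> {P 4}" by (rule ac_rev[OF f296 f536 C[of "(P 1, Pbar, Pbar)" "(P 1, P 0, Pbar)"]]) (simp_all add: XS)
  show ?thesis using f0 f526 f490 f463 f220 f222 f527 f529 f491 f493 f464 f466 f242 f260 f534 f536 f542 f497 f469 f370 by (auto simp: XS Z1_def)
qed

definition Z2 :: "(pt \<times> pt \<times> pt) set" where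
  "Z2 = {(P 0, P 0, P 0), (P 0, P 0, P 1), (P 0, P 0, P 2), (P 0, P 0, P 3), (P 0, P 0, P 4), (P 0, P 0, Pbar), (P 0, P 1, P 0), (P 0, P 1, Pbar), (P 0, P 2, P 0), (P 0, P 2, Pbar), (P 0, P 3, P 0), (P 0, P 3, Pbar), (P 0, P 4, P 0), (P 0, Pbar, Pbar), (P 1, P 0, P 0), (P 1, P 0, Pbar), (P 1, Pbar, Pbar), (P 2, P 0, P 0), (P 3, P 0, P 0), (P 4, P 0, P 0)}"
lemma rig_F2:
  fixes h :: "_ \<Rightarrow> pt"
  assumes V: "\<And>p. p \<in> verts (np1 Xex (np1 Xex Xex)) \<Longrightarrow> h p \<in> Xverts"
    and C: "\<And>p q. p \<in> verts (np1 Xex (np1 Xex Xex)) \<Longrightarrow> q \<in> verts (np1 Xex (np1 Xex Xex)) \<Longrightarrow> adj (np1 Xex (np1 Xex Xex)) p q \<Longrightarrow> adj Xex (h p) (h q)"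
    and B: "h (P 0, P 0, P 0) = P 0"
    and N: "\<And>p. p \<in> Z2 \<Longrightarrow> adj Xex (h p) (F2 p)"
  shows "\<forall>p\<in>Z2. h p = F2 p"
proof -
  have f0: "h (P 0, P 0, P 0) \<in> {P 0}" using B by simp
  have f1: "h (P 0, P 0, P 1) \<in> {P 0, P 1, P 2}" by (rule ac_init[OF V[of "(P 0, P 0, P 1)"] N[of "(P 0, P 0, P 1)"]]) (simp_all add: XS Z2_def)
  have f2: "h (P 0, P 0, P 2) \<in> {P 1, P 2, P 3}" by (rule ac_init[OF V[of "(P 0, P 0, P 2)"] N[of "(P 0, P 0, P 2)"]]) (simp_all add: XS Z2_def)
  have f3: "h (P 0, P 0, P 3) \<in> {P 2, P 3, P 4, Pbar}" by (rule ac_init[OF V[of "(P 0, P 0, P 3)"] N[of "(P 0, P 0, P 3)"]]) (simp_all add: XS Z2_def)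
  have f4: "h (P 0, P 0, P 4) \<in> {P 0, P 3, P 4}" by (rule ac_init[OF V[of "(P 0, P 0, P 4)"] N[of "(P 0, P 0, P 4)"]]) (simp_all add: XS Z2_def)
  have f5: "h (P 0, P 0, Pbar) \<in> {P 0, P 3, Pbar}" by (rule ac_init[OF V[of "(P 0, P 0, Pbar)"] N[of "(P 0, P 0, Pbar)"]]) (simp_all add: XS Z2_def)
  have f6: "h (P 0, P 1, P 0) \<in> {P 0, P 1, P 2}" by (rule ac_init[OF V[of "(P 0, P 1, P 0)"] N[of "(P 0, P 1, P 0)"]]) (simp_all add: XS Z2_def)
  have f11: "h (P 0, P 1, Pbar) \<in> {P 0, P 1, P 4, Pbar}" by (rule ac_init[OF V[of "(P 0, P 1, Pbar)"] N[of "(P 0, P 1, Pbar)"]]) (simp_all add: XS Z2_def)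
  have f12: "h (P 0, P 2, P 0) \<in> {P 1, P 2, P 3}" by (rule ac_init[OF V[of "(P 0, P 2, P 0)"] N[of "(P 0, P 2, P 0)"]]) (simp_all add: XS Z2_def)
  have f17: "h (P 0, P 2, Pbar) \<in> {P 0, P 1, P 2}" by (rule ac_init[OF V[of "(P 0, P 2, Pbar)"] N[of "(P 0, P 2, Pbar)"]]) (simp_all add: XS Z2_def)
  have f18: "h (P 0, P 3, P 0) \<in> {P 2, P 3, P 4, Pbar}" by (rule ac_init[OF V[of "(P 0, P 3, P 0)"] N[of "(P 0, P 3, P 0)"]]) (simp_all add: XS Z2_def)
  have f23: "h (P 0, P 3, Pbar) \<in> {P 1, P 2, P 3}" by (rule ac_init[OF V[of "(P 0, P 3, Pbar)"] N[of "(P 0, P 3, Pbar)"]]) (simp_all add: XS Z2_def)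
  have f24: "h (P 0, P 4, P 0) \<in> {P 0, P 3, P 4}" by (rule ac_init[OF V[of "(P 0, P 4, P 0)"] N[of "(P 0, P 4, P 0)"]]) (simp_all add: XS Z2_def)
  have f35: "h (P 0, Pbar, Pbar) \<in> {P 2, P 3, P 4, Pbar}" by (rule ac_init[OF V[of "(P 0, Pbar, Pbar)"] N[of "(P 0, Pbar, Pbar)"]]) (simp_all add: XS Z2_def)
  have f36: "h (P 1, P 0, P 0) \<in> {P 0, P 1, P 2}" by (rule ac_init[OF V[of "(P 1, P 0, P 0)"] N[of "(P 1, P 0, P 0)"]]) (simp_all add: XS Z2_def)
  have f41: "h (P 1, P 0, Pbar) \<in> {P 0, P 1, P 4, Pbar}" by (rule ac_init[OF V[of "(P 1, P 0, Pbar)"] N[of "(P 1, P 0, Pbar)"]]) (simp_all add: XS Z2_def)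
  have f71: "h (P 1, Pbar, Pbar) \<in> {P 0, P 3, Pbar}" by (rule ac_init[OF V[of "(P 1, Pbar, Pbar)"] N[of "(P 1, Pbar, Pbar)"]]) (simp_all add: XS Z2_def)
  have f72: "h (P 2, P 0, P 0) \<in> {P 1, P 2, P 3}" by (rule ac_init[OF V[of "(P 2, P 0, P 0)"] N[of "(P 2, P 0, P 0)"]]) (simp_all add: XS Z2_def)
  have f108: "h (P 3, P 0, P 0) \<in> {P 2, P 3, P 4, Pbar}" by (rule ac_init[OF V[of "(P 3, P 0, P 0)"] N[of "(P 3, P 0, P 0)"]]) (simp_all add: XS Z2_def)
  have f144: "h (P 4, P 0, P 0) \<in> {P 0, P 3, P 4}" by (rule ac_init[OF V[of "(P 4, P 0, P 0)"] N[of "(P 4, P 0, P 0)"]]) (simp_all add: XS Z2_def)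
  have f216: "h (P 0, P 0, P 1) \<in> {P 0, P 1}" by (rule ac_rev[OF f1 f0 C[of "(P 0, P 0, P 1)" "(P 0, P 0, P 0)"]]) (simp_all add: XS)
  have f217: "h (P 0, P 0, P 2) \<in> {P 1, P 2}" by (rule ac_rev[OF f2 f216 C[of "(P 0, P 0, P 2)" "(P 0, P 0, P 1)"]]) (simp_all add: XS)
  have f218: "h (P 0, P 0, P 3) \<in> {P 2, P 3}" by (rule ac_rev[OF f3 f217 C[of "(P 0, P 0, P 3)" "(P 0, P 0, P 2)"]]) (simp_all add: XS)
  have f219: "h (P 0, P 0, P 4) \<in> {P 0, P 4}" by (rule ac_rev[OF f4 f0 C[of "(P 0, P 0, P 4)" "(P 0, P 0, P 0)"]]) (simp_all add: XS)
  have f220: "h (P 0, P 0, P 4) \<in> {P 4}" by (rule ac_rev[OF f219 f218 C[of "(P 0, P 0, P 4)" "(P 0, P 0, P 3)"]]) (simp_all add: XS)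
  have f221: "h (P 0, P 0, Pbar) \<in> {P 0, Pbar}" by (rule ac_rev[OF f5 f0 C[of "(P 0, P 0, Pbar)" "(P 0, P 0, P 0)"]]) (simp_all add: XS)
  have f222: "h (P 0, P 0, Pbar) \<in> {Pbar}" by (rule ac_rev[OF f221 f218 C[of "(P 0, P 0, Pbar)" "(P 0, P 0, P 3)"]]) (simp_all add: XS)
  have f223: "h (P 0, P 1, P 0) \<in> {P 0, P 1}" by (rule ac_rev[OF f6 f0 C[of "(P 0, P 1, P 0)" "(P 0, P 0, P 0)"]]) (simp_all add: XS)
  have f228: "h (P 0, P 1, Pbar) \<in> {P 0, Pbar}" by (rule ac_rev[OF f11 f222 C[of "(P 0, P 1, Pbar)" "(P 0, P 0, Pbar)"]]) (simp_all add: XS)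
  have f229: "h (P 0, P 2, P 0) \<in> {P 1, P 2}" by (rule ac_rev[OF f12 f223 C[of "(P 0, P 2, P 0)" "(P 0, P 1, P 0)"]]) (simp_all add: XS)
  have f234: "h (P 0, P 2, Pbar) \<in> {P 0, P 1}" by (rule ac_rev[OF f17 f228 C[of "(P 0, P 2, Pbar)" "(P 0, P 1, Pbar)"]]) (simp_all add: XS)
  have f235: "h (P 0, P 3, P 0) \<in> {P 2, P 3}" by (rule ac_rev[OF f18 f229 C[of "(P 0, P 3, P 0)" "(P 0, P 2, P 0)"]]) (simp_all add: XS)
  have f240: "h (P 0, P 3, Pbar) \<in> {P 1, P 2}" by (rule ac_rev[OF f23 f234 C[of "(P 0, P 3, Pbar)" "(P 0, P 2, Pbar)"]]) (simp_all add: XS)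
  have f241: "h (P 0, P 4, P 0) \<in> {P 0, P 4}" by (rule ac_rev[OF f24 f0 C[of "(P 0, P 4, P 0)" "(P 0, P 0, P 0)"]]) (simp_all add: XS)
  have f242: "h (P 0, P 4, P 0) \<in> {P 4}" by (rule ac_rev[OF f241 f235 C[of "(P 0, P 4, P 0)" "(P 0, P 3, P 0)"]]) (simp_all add: XS)
  have f259: "h (P 0, Pbar, Pbar) \<in> {P 3, Pbar}" by (rule ac_rev[OF f35 f222 C[of "(P 0, Pbar, Pbar)" "(P 0, P 0, Pbar)"]]) (simp_all add: XS)
  have f260: "h (P 0, Pbar, Pbar) \<in> {P 3}" by (rule ac_rev[OF f259 f240 C[of "(P 0, Pbar, Pbar)" "(P 0, P 3, Pbar)"]]) (simp_all add: XS)
  have f261: "h (P 1, P 0, P 0) \<in> {P 0, P 1}" by (rule ac_rev[OF f36 f0 C[of "(P 1, P 0, P 0)" "(P 0, P 0, P 0)"]]) (simp_all add: XS)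
  have f266: "h (P 1, P 0, Pbar) \<in> {P 0, Pbar}" by (rule ac_rev[OF f41 f222 C[of "(P 1, P 0, Pbar)" "(P 0, P 0, Pbar)"]]) (simp_all add: XS)
  have f296: "h (P 1, Pbar, Pbar) \<in> {P 3, Pbar}" by (rule ac_rev[OF f71 f260 C[of "(P 1, Pbar, Pbar)" "(P 0, Pbar, Pbar)"]]) (simp_all add: XS)
  have f297: "h (P 2, P 0, P 0) \<in> {P 1, P 2}" by (rule ac_rev[OF f72 f261 C[of "(P 2, P 0, P 0)" "(P 1, P 0, P 0)"]]) (simp_all add: XS)
  have f333: "h (P 3, P 0, P 0) \<in> {P 2, P 3}" by (rule ac_rev[OF f108 f297 C[of "(P 3, P 0, P 0)" "(P 2, P 0, P 0)"]]) (simp_all add: XS)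
  have f369: "h (P 4, P 0, P 0) \<in> {P 0, P 4}" by (rule ac_rev[OF f144 f0 C[of "(P 4, P 0, P 0)" "(P 0, P 0, P 0)"]]) (simp_all add: XS)
  have f370: "h (P 4, P 0, P 0) \<in> {P 4}" by (rule ac_rev[OF f369 f333 C[of "(P 4, P 0, P 0)" "(P 3, P 0, P 0)"]]) (simp_all add: XS)
  have f463: "h (P 0, P 0, P 3) \<in> {P 3}" by (rule ac_rev[OF f218 f220 C[of "(P 0, P 0, P 3)" "(P 0, P 0, P 4)"]]) (simp_all add: XS)
  have f464: "h (P 0, P 3, P 0) \<in> {P 3}" by (rule ac_rev[OF f235 f242 C[of "(P 0, P 3, P 0)" "(P 0, P 4, P 0)"]]) (simp_all add: XS)
  have f466: "h (P 0, P 3, Pbar) \<in> {P 2}" by (rule ac_rev[OF f240 f464 C[of "(P 0, P 3, Pbar)" "(P 0, P 3, P 0)"]]) (simp_all add: XS)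
  have f469: "h (P 3, P 0, P 0) \<in> {P 3}" by (rule ac_rev[OF f333 f370 C[of "(P 3, P 0, P 0)" "(P 4, P 0, P 0)"]]) (simp_all add: XS)
  have f490: "h (P 0, P 0, P 2) \<in> {P 2}" by (rule ac_rev[OF f217 f463 C[of "(P 0, P 0, P 2)" "(P 0, P 0, P 3)"]]) (simp_all add: XS)
  have f491: "h (P 0, P 2, P 0) \<in> {P 2}" by (rule ac_rev[OF f229 f464 C[of "(P 0, P 2, P 0)" "(P 0, P 3, P 0)"]]) (simp_all add: XS)
  have f493: "h (P 0, P 2, Pbar) \<in> {P 1}" by (rule ac_rev[OF f234 f491 C[of "(P 0, P 2, Pbar)" "(P 0, P 2, P 0)"]]) (simp_all add: XS)
  have f497: "h (P 2, P 0, P 0) \<in> {P 2}" by (rule ac_rev[OF f297 f469 C[of "(P 2, P 0, P 0)" "(P 3, P 0, P 0)"]]) (simp_all add: XS)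
  have f526: "h (P 0, P 0, P 1) \<in> {P 1}" by (rule ac_rev[OF f216 f490 C[of "(P 0, P 0, P 1)" "(P 0, P 0, P 2)"]]) (simp_all add: XS)
  have f527: "h (P 0, P 1, P 0) \<in> {P 1}" by (rule ac_rev[OF f223 f491 C[of "(P 0, P 1, P 0)" "(P 0, P 2, P 0)"]]) (simp_all add: XS)
  have f529: "h (P 0, P 1, Pbar) \<in> {P 0}" by (rule ac_rev[OF f228 f527 C[of "(P 0, P 1, Pbar)" "(P 0, P 1, P 0)"]]) (simp_all add: XS)
  have f534: "h (P 1, P 0, P 0) \<in> {P 1}" by (rule ac_rev[OF f261 f497 C[of "(P 1, P 0, P 0)" "(P 2, P 0, P 0)"]]) (simp_all add: XS)
  have f536: "h (P 1, P 0, Pbar) \<in> {P 0}" by (rule ac_rev[OF f266 f534 C[of "(P 1, P 0, Pbar)" "(P 1, P 0, P 0)"]]) (simp_all add: XS)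
  have f542: "h (P 1, Pbar, Pbar) \<in> {Pbar}" by (rule ac_rev[OF f296 f536 C[of "(P 1, Pbar, Pbar)" "(P 1, P 0, Pbar)"]]) (simp_all add: XS)
  show ?thesis using f0 f526 f490 f463 f220 f222 f527 f529 f491 f493 f464 f466 f242 f260 f534 f536 f542 f497 f469 f370 by (auto simp: XS Z2_def)
qed



lemma verts_Xex[simp]: "verts Xex = Xverts" by (simp add: Xex_def)

definition rigidZ :: "'p dimg \<Rightarrow> 'p \<Rightarrow> ('p \<Rightarrow> pt) \<Rightarrow> 'p set \<Rightarrow> bool" where
  "rigidZ Y b F Z \<longleftrightarrow> (\<forall>h. (\<forall>p\<in>verts Y. h p \<in> Xverts)
      \<and> (\<forall>p\<in>verts Y. \<forall>q\<in>verts Y. adj Y p q \<longrightarrow> adj Xex (h p) (h q))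
      \<and> h b = P 0 \<and> (\<forall>p\<in>Z. adj Xex (h p) (F p)) \<longrightarrow> (\<forall>p\<in>Z. h p = F p))"

lemma hc_verts: "dcont (np1 Y (dinterval m)) Z (\<lambda>(x,t). H x t) \<Longrightarrow> x\<in>verts Y \<Longrightarrow> t \<le> m \<Longrightarrow> H x t \<in> verts Z"
  unfolding dcont_def np1_def dinterval_def by auto

lemma hc_space: "dcont (np1 Y (dinterval m)) Z (\<lambda>(x,t). H x t) \<Longrightarrow> x\<in>verts Y \<Longrightarrow> x'\<in>verts Y
  \<Longrightarrow> adj Y x x' \<Longrightarrow> t \<le> m \<Longrightarrow> adj Z (H x t) (H x' t)"
  unfolding dcont_def np1_def dinterval_def by fastforce

lemma hc_time1: "dcont (np1 Y (dinterval m)) Z (\<lambda>(x,t). H x t) \<Longrightarrow> x\<in>verts Y \<Longrightarrow> Suc t \<le> m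
  \<Longrightarrow> adj Z (H x (Suc t)) (H x t)"
  unfolding dcont_def np1_def dinterval_def
  by (drule conjunct2, drule bspec[of _ _ "(x, Suc t)"], simp, drule bspec[of _ _ "(x, t)"], auto)

lemma hc_time2: "dcont (np1 Y (dinterval m)) Z (\<lambda>(x,t). H x t) \<Longrightarrow> x\<in>verts Y \<Longrightarrow> Suc t \<le> m
  \<Longrightarrow> adj Z (H x t) (H x (Suc t))"
  unfolding dcont_def np1_def dinterval_def
  by (drule conjunct2, drule bspec[of _ _ "(x, t)"], simp, drule bspec[of _ _ "(x, Suc t)"], auto)

lemma rigidZ_step:
  assumes R: "rigidZ Y b F Z" and HC: "dcont (np1 Y (dinterval m)) Xex (\<lambda>(x,t). H x t)"
    and Hb: "H b t = P 0" and t: "t \<le> m" and N: "\<forall>p\<in>Z. adj Xex (H p t) (F p)"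
  shows "\<forall>p\<in>Z. H p t = F p"
proof -
  have V: "\<forall>p\<in>verts Y. H p t \<in> Xverts" using hc_verts[OF HC _ t] by simp
  have C: "\<forall>p\<in>verts Y. \<forall>q\<in>verts Y. adj Y p q \<longrightarrow> adj Xex (H p t) (H q t)"
    using hc_space[OF HC _ _ _ t] by blast
  show ?thesis using R[unfolded rigidZ_def, THEN spec[of _ "\<lambda>p. H p t"]] V C Hb N by blast
qed

lemma rigidZ_fwd:
  assumes R: "rigidZ Y b F Z" and HC: "dcont (np1 Y (dinterval m)) Xex (\<lambda>(x,t). H x t)"
    and Hb: "\<forall>t\<le>m. H b t = P 0" and H0: "\<forall>p\<in>Z. H p 0 = F p" and ZY: "Z \<subseteq> verts Y"
  shows "\<forall>p\<in>Z. H p m = F p"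
proof -
  have "t \<le> m \<Longrightarrow> \<forall>p\<in>Z. H p t = F p" for t
  proof (induction t)
    case 0 show ?case using H0 by simp
  next
    case (Suc t)
    have IH: "\<forall>p\<in>Z. H p t = F p" using Suc.IH[OF Suc_leD[OF Suc.prems]] .
    have "\<forall>p\<in>Z. adj Xex (H p (Suc t)) (F p)"
    proof
      fix p assume p: "p \<in> Z"
      then have "p \<in> verts Y" using ZY by auto
      from hc_time1[OF HC this Suc.prems] show "adj Xex (H p (Suc t)) (F p)" using IH p by simp
    qed
    moreover have "H b (Suc t) = P 0" using Hb Suc.prems by blast
    ultimately show ?case using rigidZ_step[OF R HC _ Suc.prems] by blast
  qed
  then show ?thesis by simp
qed

lemma rigidZ_bwd:
  assumes R: "rigidZ Y b F Z" and HC: "dcont (np1 Y (dinterval m)) Xex (\<lambda>(x,t). H x t)"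
    and Hb: "\<forall>t\<le>m. H b t = P 0" and Hm: "\<forall>p\<in>Z. H p m = F p" and ZY: "Z \<subseteq> verts Y"
  shows "\<forall>p\<in>Z. H p 0 = F p"
proof -
  have "k \<le> m \<Longrightarrow> \<forall>p\<in>Z. H p (m - k) = F p" for k
  proof (induction k)
    case 0 show ?case using Hm by simp
  next
    case (Suc k)
    define t where "t = m - Suc k"
    have mk: "m - k = Suc t" "Suc t \<le> m" "t \<le> m" using Suc.prems unfolding t_def by auto
    have IH: "\<forall>p\<in>Z. H p (Suc t) = F p" using Suc.IH[OF Suc_leD[OF Suc.prems]] mk(1) by simp
    have "\<forall>p\<in>Z. adj Xex (H p t) (F p)"
    proof
      fix p assume p: "p \<in> Z"
      then have "p \<in> verts Y" using ZY by auto
      from hc_time2[OF HC this mk(2)] show "adj Xex (H p t) (F p)" using IH p by simp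
    qed
    moreover have "H b t = P 0" using Hb mk(3) by blast
    ultimately have "\<forall>p\<in>Z. H p t = F p" using rigidZ_step[OF R HC _ mk(3)] by blast
    then show ?case unfolding t_def by simp
  qed
  from this[of m] show ?thesis by simp
qed

lemma rigidZ_id: "rigidZ Xex (P 0) id (verts Xex)"
  unfolding rigidZ_def
  apply (intro allI impI, elim conjE)
  subgoal for h by (rule rig_id[of h]; blast) done

lemma rigidZ_tau: "rigidZ (np1 Xex Xex) (P 0, P 0) tau (verts (np1 Xex Xex))"
  unfolding rigidZ_def
  apply (intro allI impI, elim conjE)
  subgoal for h by (rule rig_tau[of h]; blast)
  done

lemma rigidZ_F1: "rigidZ (np1 Xex (np1 Xex Xex)) (P 0, P 0, P 0) F1 Z1"
  unfolding rigidZ_def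
  apply (intro allI impI, elim conjE)
  subgoal for h by (rule rig_F1[of h]; blast)
  done

lemma rigidZ_F2: "rigidZ (np1 Xex (np1 Xex Xex)) (P 0, P 0, P 0) F2 Z2"
  unfolding rigidZ_def
  apply (intro allI impI, elim conjE)
  subgoal for h by (rule rig_F2[of h]; blast)
  done

lemma Z1_sub: "Z1 \<subseteq> verts (np1 Xex (np1 Xex Xex))" and Z2_sub: "Z2 \<subseteq> verts (np1 Xex (np1 Xex Xex))"
  unfolding Z1_def Z2_def by (simp_all add: np1_def Xverts_def)

lemma q_Z: "(P 1, Pbar, Pbar) \<in> Z1" "(P 1, Pbar, Pbar) \<in> Z2"
  by (auto simp: Z1_def Z2_def)

lemma dcont_comp: "dcont A B u \<Longrightarrow> dcont B C v \<Longrightarrow> dcont A C (\<lambda>x. v (u x))"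
  unfolding dcont_def by auto

lemma slice1: "dcont (np1 A B) C (\<lambda>(a,b). F a b) \<Longrightarrow> a \<in> verts A \<Longrightarrow> dcont B C (F a)"
  unfolding dcont_def np1_def by fastforce

lemma slice2: "dcont (np1 A B) C (\<lambda>(a,b). F a b) \<Longrightarrow> b \<in> verts B \<Longrightarrow> dcont A C (\<lambda>a. F a b)"
  unfolding dcont_def np1_def by fastforce

lemma np1I: "(\<And>a. a \<in> verts A \<Longrightarrow> dcont B C (F a)) \<Longrightarrow> (\<And>b. b \<in> verts B \<Longrightarrow> dcont A C (\<lambda>a. F a b))
  \<Longrightarrow> dcont (np1 A B) C (\<lambda>(a,b). F a b)"
  unfolding dcont_def np1_def by fastforce

lemma dcont_vert: "dcont A B u \<Longrightarrow> x \<in> verts A \<Longrightarrow> u x \<in> verts B"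
  unfolding dcont_def by auto

lemma dint_verts: "t \<in> verts (dinterval m) \<longleftrightarrow> t \<le> m"
  by (auto simp: dinterval_def)



lemma contA:
  assumes df: "dcont X Y f" and dg: "dcont Y Z g" and dm: "dcont (np1 Y Y) Y (\<lambda>(a,b). mu a b)"
    and dK: "dcont (np1 Y (dinterval m)) Y (\<lambda>(w,t). K w t)"
  shows "dcont (np1 (np1 X (np1 X X)) (dinterval m)) Z
           (\<lambda>(p,t). case p of (x,y,z) \<Rightarrow> g (mu (f x) (K (mu (f y) (f z)) t)))"
proof (rule np1I)
  have mv: "a \<in> verts Y \<Longrightarrow> b \<in> verts Y \<Longrightarrow> mu a b \<in> verts Y" for a b
    using dcont_vert[OF dm, of "(a,b)"] by (simp add: np1_def)
  have fv: "x \<in> verts X \<Longrightarrow> f x \<in> verts Y" for x using dcont_vert[OF df] .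
  have Kv: "w \<in> verts Y \<Longrightarrow> t \<le> m \<Longrightarrow> K w t \<in> verts Y" for w t
    using dcont_vert[OF dK, of "(w,t)"] by (simp add: np1_def dinterval_def)
  fix p assume "p \<in> verts (np1 X (np1 X X))"
  then obtain x y z where p: "p = (x,y,z)" and v: "x \<in> verts X" "y \<in> verts X" "z \<in> verts X"
    by (cases p) (auto simp: np1_def)
  have w: "mu (f y) (f z) \<in> verts Y" using mv fv v by blast
  have "dcont (dinterval m) Z (\<lambda>t. g (mu (f x) (K (mu (f y) (f z)) t)))"
    using dcont_comp[OF dcont_comp[OF slice1[OF dK w] slice1[OF dm fv[OF v(1)]]] dg] .
  then show "dcont (dinterval m) Z (\<lambda>t. case p of (x,y,z) \<Rightarrow> g (mu (f x) (K (mu (f y) (f z)) t)))"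
    using p by simp
next
  have mv: "a \<in> verts Y \<Longrightarrow> b \<in> verts Y \<Longrightarrow> mu a b \<in> verts Y" for a b
    using dcont_vert[OF dm, of "(a,b)"] by (simp add: np1_def)
  have fv: "x \<in> verts X \<Longrightarrow> f x \<in> verts Y" for x using dcont_vert[OF df] .
  have Kv: "w \<in> verts Y \<Longrightarrow> t \<le> m \<Longrightarrow> K w t \<in> verts Y" for w t
    using dcont_vert[OF dK, of "(w,t)"] by (simp add: np1_def dinterval_def)
  fix t assume "t \<in> verts (dinterval m)"
  then have t: "t \<le> m" by (simp add: dinterval_def)
  have tv: "t \<in> verts (dinterval m)" using t by (simp add: dinterval_def)
  show "dcont (np1 X (np1 X X)) Z (\<lambda>p. case p of (x,y,z) \<Rightarrow> g (mu (f x) (K (mu (f y) (f z)) t)))"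
  proof (rule np1I)
    fix x assume x: "x \<in> verts X"
    show "dcont (np1 X X) Z (\<lambda>yz. case yz of (y,z) \<Rightarrow> g (mu (f x) (K (mu (f y) (f z)) t)))"
    proof (rule np1I)
      fix y assume y: "y \<in> verts X"
      show "dcont X Z (\<lambda>z. g (mu (f x) (K (mu (f y) (f z)) t)))"
        using dcont_comp[OF dcont_comp[OF dcont_comp[OF dcont_comp[OF df slice1[OF dm fv[OF y]]]
              slice2[OF dK tv]] slice1[OF dm fv[OF x]]] dg] .
    next
      fix z assume z: "z \<in> verts X"
      show "dcont X Z (\<lambda>y. g (mu (f x) (K (mu (f y) (f z)) t)))"
        using dcont_comp[OF dcont_comp[OF dcont_comp[OF dcont_comp[OF df slice2[OF dm fv[OF z]]]
              slice2[OF dK tv]] slice1[OF dm fv[OF x]]] dg] .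
    qed
  next
    fix yz assume "yz \<in> verts (np1 X X)"
    then obtain y z where yz: "yz = (y,z)" and v: "y \<in> verts X" "z \<in> verts X"
      by (cases yz) (auto simp: np1_def)
    have c: "K (mu (f y) (f z)) t \<in> verts Y" using Kv mv fv v t by blast
    have "dcont X Z (\<lambda>x. g (mu (f x) (K (mu (f y) (f z)) t)))"
      using dcont_comp[OF dcont_comp[OF df slice2[OF dm c]] dg] .
    then show "dcont X Z (\<lambda>x. case yz of (y,z) \<Rightarrow> g (mu (f x) (K (mu (f y) (f z)) t)))"
      using yz by simp
  qed
qed

lemma contB:
  assumes df: "dcont X Y f" and dg: "dcont Y Z g" and dm: "dcont (np1 Y Y) Y (\<lambda>(a,b). mu a b)"
    and dK: "dcont (np1 Y (dinterval m)) Y (\<lambda>(w,t). K w t)"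
  shows "dcont (np1 (np1 X (np1 X X)) (dinterval m)) Z
           (\<lambda>(p,t). case p of (x,y,z) \<Rightarrow> g (mu (K (mu (f x) (f y)) t) (f z)))"
proof (rule np1I)
  have mv: "a \<in> verts Y \<Longrightarrow> b \<in> verts Y \<Longrightarrow> mu a b \<in> verts Y" for a b
    using dcont_vert[OF dm, of "(a,b)"] by (simp add: np1_def)
  have fv: "x \<in> verts X \<Longrightarrow> f x \<in> verts Y" for x using dcont_vert[OF df] .
  fix p assume "p \<in> verts (np1 X (np1 X X))"
  then obtain x y z where p: "p = (x,y,z)" and v: "x \<in> verts X" "y \<in> verts X" "z \<in> verts X"
    by (cases p) (auto simp: np1_def)
  have w: "mu (f x) (f y) \<in> verts Y" using mv fv v by blast
  have "dcont (dinterval m) Z (\<lambda>t. g (mu (K (mu (f x) (f y)) t) (f z)))"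
    using dcont_comp[OF dcont_comp[OF slice1[OF dK w] slice2[OF dm fv[OF v(3)]]] dg] .
  then show "dcont (dinterval m) Z (\<lambda>t. case p of (x,y,z) \<Rightarrow> g (mu (K (mu (f x) (f y)) t) (f z)))"
    using p by simp
next
  have mv: "a \<in> verts Y \<Longrightarrow> b \<in> verts Y \<Longrightarrow> mu a b \<in> verts Y" for a b
    using dcont_vert[OF dm, of "(a,b)"] by (simp add: np1_def)
  have fv: "x \<in> verts X \<Longrightarrow> f x \<in> verts Y" for x using dcont_vert[OF df] .
  have Kv: "w \<in> verts Y \<Longrightarrow> t \<le> m \<Longrightarrow> K w t \<in> verts Y" for w t
    using dcont_vert[OF dK, of "(w,t)"] by (simp add: np1_def dinterval_def)
  fix t assume "t \<in> verts (dinterval m)"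
  then have t: "t \<le> m" by (simp add: dinterval_def)
  have tv: "t \<in> verts (dinterval m)" using t by (simp add: dinterval_def)
  show "dcont (np1 X (np1 X X)) Z (\<lambda>p. case p of (x,y,z) \<Rightarrow> g (mu (K (mu (f x) (f y)) t) (f z)))"
  proof (rule np1I)
    fix x assume x: "x \<in> verts X"
    show "dcont (np1 X X) Z (\<lambda>yz. case yz of (y,z) \<Rightarrow> g (mu (K (mu (f x) (f y)) t) (f z)))"
    proof (rule np1I)
      fix y assume y: "y \<in> verts X"
      have c: "K (mu (f x) (f y)) t \<in> verts Y" using Kv mv fv x y t by blast
      show "dcont X Z (\<lambda>z. g (mu (K (mu (f x) (f y)) t) (f z)))"
        using dcont_comp[OF dcont_comp[OF df slice1[OF dm c]] dg] .
    next
      fix z assume z: "z \<in> verts X"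
      show "dcont X Z (\<lambda>y. g (mu (K (mu (f x) (f y)) t) (f z)))"
        using dcont_comp[OF dcont_comp[OF dcont_comp[OF dcont_comp[OF df slice1[OF dm fv[OF x]]]
              slice2[OF dK tv]] slice2[OF dm fv[OF z]]] dg] .
    qed
  next
    fix yz assume "yz \<in> verts (np1 X X)"
    then obtain y z where yz: "yz = (y,z)" and v: "y \<in> verts X" "z \<in> verts X"
      by (cases yz) (auto simp: np1_def)
    have "dcont X Z (\<lambda>x. g (mu (K (mu (f x) (f y)) t) (f z)))"
      using dcont_comp[OF dcont_comp[OF dcont_comp[OF dcont_comp[OF df slice2[OF dm fv[OF v(1)]]]
              slice2[OF dK tv]] slice2[OF dm fv[OF v(2)]]] dg] .
    then show "dcont X Z (\<lambda>x. case yz of (y,z) \<Rightarrow> g (mu (K (mu (f x) (f y)) t) (f z)))"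
      using yz by simp
  qed
qed



lemma tslice1: "a \<in> Xverts \<Longrightarrow> dcont Xex Xex (\<lambda>b. tau (a,b))"
  unfolding Xverts_def
  by (elim insertE; simp; auto simp: dcont_def Xex_def Xverts_def Xedges_def)

lemma tslice2: "b \<in> Xverts \<Longrightarrow> dcont Xex Xex (\<lambda>a. tau (a,b))"
  unfolding Xverts_def
  by (elim insertE; simp; auto simp: dcont_def Xex_def Xverts_def Xedges_def)

lemma tau_cont: "dcont (np1 Xex Xex) Xex tau"
proof -
  have "dcont (np1 Xex Xex) Xex (\<lambda>(a,b). tau (a,b))"
    by (rule np1I) (simp_all add: tslice1 tslice2)
  then show ?thesis by simp
qed

lemma dimX: "digital_image Xex"
  unfolding digital_image_def Xex_def Xverts_def Xedges_def by auto

lemma proj_cont: "digital_image X \<Longrightarrow> dcont (np1 X (dinterval m)) X (\<lambda>(x,t). x)"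
  unfolding dcont_def np1_def digital_image_def by auto

lemma unitr: "x \<in> Xverts \<Longrightarrow> tau (x, P 0) = x" and unitl: "x \<in> Xverts \<Longrightarrow> tau (P 0, x) = x"
  unfolding Xverts_def by auto

lemma hom_triv:
  assumes "\<forall>x\<in>Xverts. u x = x"
  shows "np1_homotopic Xex Xex u id" "np1_pointed_homotopic Xex (P 0) Xex (P 0) u id"
  unfolding np1_homotopic_def np1_pointed_homotopic_def
  using proj_cont[OF dimX, of 0] assms by (auto intro!: exI[of _ 0] exI[of _ "\<lambda>x t. x"])

theorem mainTheorem15:
  shows "dcont (np1 Xex Xex) Xex tau
       \<and> np1_unital_hspace Xex (P 0) tau
       \<and> np1_pointed_hspace Xex (P 0) tau
       \<and> \<not> pointed_homotopy_associative Xex (P 0) tau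
       \<and> \<not> (\<exists>(Y :: 'b dimg) (G :: 'b monoid).
              np1_digital_topological_group Y G
              \<and> pointed_H_equivalent Xex (P 0) tau Y \<one>\<^bsub>G\<^esub> (\<lambda>(x, y). x \<otimes>\<^bsub>G\<^esub> y))"
proof -
  have A: "dcont (np1 Xex Xex) Xex tau" by (rule tau_cont)
  have ur: "\<forall>x\<in>Xverts. tau (x, P 0) = x" and ul: "\<forall>x\<in>Xverts. tau (P 0, x) = x"
    using unitr unitl by auto
  have hs: "np1_hspace Xex (P 0) tau"
    unfolding np1_hspace_def using dimX A hom_triv(1)[OF ur] hom_triv(1)[OF ul]
    by (simp add: Xverts_def)
  have U: "np1_unital_hspace Xex (P 0) tau"
    unfolding np1_unital_hspace_def using hs ur ul by simp
  have PH: "np1_pointed_hspace Xex (P 0) tau"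
    unfolding np1_pointed_hspace_def using hs hom_triv(2)[OF ur] hom_triv(2)[OF ul] by simp
  have NA: "\<not> pointed_homotopy_associative Xex (P 0) tau"
  proof
    assume "pointed_homotopy_associative Xex (P 0) tau"
    then obtain m H where HC: "dcont (np1 (np1 Xex (np1 Xex Xex)) (dinterval m)) Xex (\<lambda>(x,t). H x t)"
      and E: "\<forall>x\<in>verts (np1 Xex (np1 Xex Xex)). H x 0 = (\<lambda>(x, y, z). tau (x, tau (y, z))) x
                 \<and> H x m = (\<lambda>(x, y, z). tau (tau (x, y), z)) x"
      and B: "\<forall>t\<le>m. H (P 0, P 0, P 0) t = P 0"
      unfolding pointed_homotopy_associative_def np1_pointed_homotopic_def by blast
    have "\<forall>p\<in>Z1. H p 0 = F1 p" using E Z1_sub unfolding F1_def by blast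
    from rigidZ_fwd[OF rigidZ_F1 HC B this Z1_sub] q_Z(1)
    have "H (P 1, Pbar, Pbar) m = F1 (P 1, Pbar, Pbar)" by blast
    moreover have "H (P 1, Pbar, Pbar) m = tau (tau (P 1, Pbar), Pbar)"
      using E Z1_sub q_Z(1) by auto
    ultimately show False by (simp add: F1_def)
  qed
  have NE: "\<not> (\<exists>(Y :: 'b dimg) (G :: 'b monoid).
              np1_digital_topological_group Y G
              \<and> pointed_H_equivalent Xex (P 0) tau Y \<one>\<^bsub>G\<^esub> (\<lambda>(x, y). x \<otimes>\<^bsub>G\<^esub> y))"
  proof
    assume "\<exists>(Y :: 'b dimg) (G :: 'b monoid).
              np1_digital_topological_group Y G
              \<and> pointed_H_equivalent Xex (P 0) tau Y \<one>\<^bsub>G\<^esub> (\<lambda>(x, y). x \<otimes>\<^bsub>G\<^esub> y)"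
    then obtain Y :: "'b dimg" and G :: "'b monoid" where TG: "np1_digital_topological_group Y G"
      and HE: "pointed_H_equivalent Xex (P 0) tau Y \<one>\<^bsub>G\<^esub> (\<lambda>(x, y). x \<otimes>\<^bsub>G\<^esub> y)" by blast
    from TG have grp: "group G" and car: "carrier G = verts Y"
      and dm: "dcont (np1 Y Y) Y (\<lambda>(x, y). x \<otimes>\<^bsub>G\<^esub> y)"
      unfolding np1_digital_topological_group_def by auto
    interpret G: group G by (rule grp)
    from HE obtain f g where df: "dcont Xex Y f" and dg: "dcont Y Xex g"
      and f0: "f (P 0) = \<one>\<^bsub>G\<^esub>" and g0: "g \<one>\<^bsub>G\<^esub> = P 0"
      and hfg: "np1_pointed_homotopic Y \<one>\<^bsub>G\<^esub> Y \<one>\<^bsub>G\<^esub> (f \<circ> g) id"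
      and hgf: "np1_pointed_homotopic Xex (P 0) Xex (P 0) (g \<circ> f) id"
      and hmu: "np1_pointed_homotopic (np1 Xex Xex) (P 0, P 0) Y \<one>\<^bsub>G\<^esub> (f \<circ> tau)
                   (\<lambda>(x, y). (\<lambda>(x, y). x \<otimes>\<^bsub>G\<^esub> y) (f x, f y))"
      unfolding pointed_H_equivalent_def by blast
    have fv: "x \<in> Xverts \<Longrightarrow> f x \<in> carrier G" for x using dcont_vert[OF df, of x] car by simp
    have gv: "w \<in> carrier G \<Longrightarrow> g w \<in> Xverts" for w using dcont_vert[OF dg, of w] car by simp
    from hgf obtain m1 H1 where HC1: "dcont (np1 Xex (dinterval m1)) Xex (\<lambda>(x,t). H1 x t)"
      and E1: "\<forall>x\<in>verts Xex. H1 x 0 = (g \<circ> f) x \<and> H1 x m1 = id x"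
      and B1: "\<forall>t\<le>m1. H1 (P 0) t = P 0"
      unfolding np1_pointed_homotopic_def by blast
    have "\<forall>p\<in>verts Xex. H1 p 0 = id p"
      by (rule rigidZ_bwd[OF rigidZ_id HC1 B1 _ subset_refl]) (use E1 in blast)
    then have gf: "x \<in> Xverts \<Longrightarrow> g (f x) = x" for x using E1 by auto
    from hmu obtain m2 H2 where HC2: "dcont (np1 (np1 Xex Xex) (dinterval m2)) Y (\<lambda>(x,t). H2 x t)"
      and E2: "\<forall>x\<in>verts (np1 Xex Xex). H2 x 0 = (f \<circ> tau) x
                  \<and> H2 x m2 = (\<lambda>(x, y). (\<lambda>(x, y). x \<otimes>\<^bsub>G\<^esub> y) (f x, f y)) x"
      and B2: "\<forall>t\<le>m2. H2 (P 0, P 0) t = \<one>\<^bsub>G\<^esub>"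
      unfolding np1_pointed_homotopic_def by blast
    have eq2: "(\<lambda>x. g ((\<lambda>(x,t). H2 x t) x)) = (\<lambda>(p,t). g (H2 p t))"
      by (rule ext) (simp split: prod.split)
    have HC2': "dcont (np1 (np1 Xex Xex) (dinterval m2)) Xex (\<lambda>(p,t). g (H2 p t))"
      using dcont_comp[OF HC2 dg] unfolding eq2 .
    have B2': "\<forall>t\<le>m2. g (H2 (P 0, P 0) t) = P 0" using B2 g0 by simp
    have E2': "\<forall>p\<in>verts (np1 Xex Xex). g (H2 p 0) = tau p"
    proof
      fix p assume p: "p \<in> verts (np1 Xex Xex)"
      have "tau p \<in> Xverts" using dcont_vert[OF A p] by simp
      then show "g (H2 p 0) = tau p" using E2 p gf by simp
    qed
    have R2: "\<forall>p\<in>verts (np1 Xex Xex). g (H2 p m2) = tau p"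
      using rigidZ_fwd[OF rigidZ_tau HC2' B2' E2' subset_refl] .
    have tT: "a \<in> Xverts \<Longrightarrow> b \<in> Xverts \<Longrightarrow> tau (a, b) = g (f a \<otimes>\<^bsub>G\<^esub> f b)" for a b
    proof -
      assume ab: "a \<in> Xverts" "b \<in> Xverts"
      then have "(a,b) \<in> verts (np1 Xex Xex)" by (simp add: np1_def)
      then show ?thesis using R2 E2 by force
    qed
    have tv: "a \<in> Xverts \<Longrightarrow> b \<in> Xverts \<Longrightarrow> tau (a, b) \<in> Xverts" for a b
      using dcont_vert[OF A, of "(a,b)"] by (simp add: np1_def)
    from hfg obtain m3 K where KC: "dcont (np1 Y (dinterval m3)) Y (\<lambda>(x,t). K x t)"
      and E3: "\<forall>w\<in>verts Y. K w 0 = (f \<circ> g) w \<and> K w m3 = id w"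
      and B3: "\<forall>t\<le>m3. K \<one>\<^bsub>G\<^esub> t = \<one>\<^bsub>G\<^esub>"
      unfolding np1_pointed_homotopic_def by blast
    have K0: "w \<in> carrier G \<Longrightarrow> K w 0 = f (g w)" and Km: "w \<in> carrier G \<Longrightarrow> K w m3 = w" for w
      using E3 car by auto
    have one1: "\<one>\<^bsub>G\<^esub> \<otimes>\<^bsub>G\<^esub> \<one>\<^bsub>G\<^esub> = \<one>\<^bsub>G\<^esub>" by simp
    note HAC = contA[OF df dg dm KC]
    note HBC = contB[OF df dg dm KC]
    have BA: "\<forall>t\<le>m3. (case (P 0, P 0, P 0) of (x, y, z) \<Rightarrow>
         g (f x \<otimes>\<^bsub>G\<^esub> K (f y \<otimes>\<^bsub>G\<^esub> f z) t)) = P 0"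
      using B3 f0 g0 by simp
    have BB: "\<forall>t\<le>m3. (case (P 0, P 0, P 0) of (x, y, z) \<Rightarrow>
         g (K (f x \<otimes>\<^bsub>G\<^esub> f y) t \<otimes>\<^bsub>G\<^esub> f z)) = P 0"
      using B3 f0 g0 by simp
    have Z1v: "p \<in> Z1 \<Longrightarrow> \<exists>x y z. p = (x,y,z) \<and> x \<in> Xverts \<and> y \<in> Xverts \<and> z \<in> Xverts" for p
      using Z1_sub by (auto simp: np1_def)
    have Z2v: "p \<in> Z2 \<Longrightarrow> \<exists>x y z. p = (x,y,z) \<and> x \<in> Xverts \<and> y \<in> Xverts \<and> z \<in> Xverts" for p
      using Z2_sub by (auto simp: np1_def)
    have A0: "\<forall>p\<in>Z1. (case p of (x, y, z) \<Rightarrow> g (f x \<otimes>\<^bsub>G\<^esub> K (f y \<otimes>\<^bsub>G\<^esub> f z) 0)) = F1 p"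
    proof
      fix p assume "p \<in> Z1"
      then obtain x y z where p: "p = (x,y,z)" and v: "x \<in> Xverts" "y \<in> Xverts" "z \<in> Xverts"
        using Z1v by blast
      have "F1 p = tau (x, tau (y, z))" by (simp add: F1_def p)
      also have "\<dots> = g (f x \<otimes>\<^bsub>G\<^esub> f (tau (y, z)))" using tT v tv by blast
      also have "\<dots> = g (f x \<otimes>\<^bsub>G\<^esub> f (g (f y \<otimes>\<^bsub>G\<^esub> f z)))" using tT v by simp
      also have "\<dots> = g (f x \<otimes>\<^bsub>G\<^esub> K (f y \<otimes>\<^bsub>G\<^esub> f z) 0)" using K0 fv v by simp
      finally show "(case p of (x, y, z) \<Rightarrow> g (f x \<otimes>\<^bsub>G\<^esub> K (f y \<otimes>\<^bsub>G\<^esub> f z) 0)) = F1 p"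
        using p by simp
    qed
    have B0: "\<forall>p\<in>Z2. (case p of (x, y, z) \<Rightarrow> g (K (f x \<otimes>\<^bsub>G\<^esub> f y) 0 \<otimes>\<^bsub>G\<^esub> f z)) = F2 p"
    proof
      fix p assume "p \<in> Z2"
      then obtain x y z where p: "p = (x,y,z)" and v: "x \<in> Xverts" "y \<in> Xverts" "z \<in> Xverts"
        using Z2v by blast
      have "F2 p = tau (tau (x, y), z)" by (simp add: F2_def p)
      also have "\<dots> = g (f (tau (x, y)) \<otimes>\<^bsub>G\<^esub> f z)" using tT v tv by blast
      also have "\<dots> = g (f (g (f x \<otimes>\<^bsub>G\<^esub> f y)) \<otimes>\<^bsub>G\<^esub> f z)" using tT v by simp
      also have "\<dots> = g (K (f x \<otimes>\<^bsub>G\<^esub> f y) 0 \<otimes>\<^bsub>G\<^esub> f z)" using K0 fv v by simp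
      finally show "(case p of (x, y, z) \<Rightarrow> g (K (f x \<otimes>\<^bsub>G\<^esub> f y) 0 \<otimes>\<^bsub>G\<^esub> f z)) = F2 p"
        using p by simp
    qed
    note RA = rigidZ_fwd[OF rigidZ_F1 HAC BA A0 Z1_sub]
    note RB = rigidZ_fwd[OF rigidZ_F2 HBC BB B0 Z2_sub]
    have vq: "P 1 \<in> Xverts" "Pbar \<in> Xverts" by (simp_all add: Xverts_def)
    have wc: "f Pbar \<otimes>\<^bsub>G\<^esub> f Pbar \<in> carrier G" "f (P 1) \<otimes>\<^bsub>G\<^esub> f Pbar \<in> carrier G"
      using fv vq by simp_all
    have "(case (P 1, Pbar, Pbar) of (x, y, z) \<Rightarrow> g (f x \<otimes>\<^bsub>G\<^esub> K (f y \<otimes>\<^bsub>G\<^esub> f z) m3)) = F1 (P 1, Pbar, Pbar)"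
      using RA q_Z(1) by blast
    then have "g (f (P 1) \<otimes>\<^bsub>G\<^esub> (f Pbar \<otimes>\<^bsub>G\<^esub> f Pbar)) = F1 (P 1, Pbar, Pbar)"
      using Km[OF wc(1)] by simp
    moreover have "(case (P 1, Pbar, Pbar) of (x, y, z) \<Rightarrow> g (K (f x \<otimes>\<^bsub>G\<^esub> f y) m3 \<otimes>\<^bsub>G\<^esub> f z)) = F2 (P 1, Pbar, Pbar)"
      using RB q_Z(2) by blast
    then have "g ((f (P 1) \<otimes>\<^bsub>G\<^esub> f Pbar) \<otimes>\<^bsub>G\<^esub> f Pbar) = F2 (P 1, Pbar, Pbar)"
      using Km[OF wc(2)] by simp
    moreover have "(f (P 1) \<otimes>\<^bsub>G\<^esub> f Pbar) \<otimes>\<^bsub>G\<^esub> f Pbar = f (P 1) \<otimes>\<^bsub>G\<^esub> (f Pbar \<otimes>\<^bsub>G\<^esub> f Pbar)"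
      using fv vq by (simp add: G.m_assoc)
    ultimately show False by (simp add: F1_def F2_def)
  qed
  show ?thesis using A U PH NA NE by blast
qed

end
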